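(* Let $\mathbf{X},\mathbf{D}$ be Banach spaces with $\mathbf{D}\subset\mathbf{X}$ and let $(A(t))_{t\in[0,1]}$ be closed linear operators on $\mathbf{X}$ with $\mathbf{D}(A(t))=\mathbf{D}$ for all $t$. Suppose $A:[0,1]\to\mathcal{L}(\mathbf{D},\mathbf{X})$ is analytic and there are $M>0$, $r<0$ and $\theta\in(0,\pi/2)$ with $A(t)\in\mathcal{S}(M,r,\theta)$ for all $t\in[0,1]$. Then there exist a convex open set $U\subset\mathbb{C}$ containing $[0,1]$ and an analytic extension of $A$ to $U$ such that $A(z)\in\mathcal{S}(2M,r,\theta)$ for all $z\in U$, and the function $A^{-1}:[0,1]\to\mathcal{L}(\mathbf{X},\mathbf{D})$ is analytic.
   Context: $\mathbf{D}\subset\mathbf{X}$ denotes continuous embedding; $\mathbf{D}(A)=\mathbf{D}$ means the domain of $A$, equipped with the graph norm $\|Ax\|_{\mathbf{X}}+\|x\|_{\mathbf{X}}$, coincides with $\mathbf{D}$ with equivalent norms (mutual continuous embeddings). $\mathcal{L}(\mathbf{X},\mathbf{D})$ is the Banach space of bounded linear operators $\mathbf{X}\to\mathbf{D}$ with operator norm, $\mathcal{L}(\mathbf{X})=\mathcal{L}(\mathbf{X},\mathbf{X})$. Analytic maps into a Banach space: locally norm-convergent power series. The resolvent set $\rho(A)$ consists of $\lambda\in\mathbb{C}$ such that $\lambda I-A:\mathbf{D}(A)\to\mathbf{X}$ is invertible, with inverse $R(\lambda,A)$. $\mathcal{S}(M,r,\theta)$ is the set of closed operators $A$ such that the sector $S_{r,\theta}:=\{\lambda\in\mathbb{C}:\lambda\ne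 r,\ |\arg(\lambda-r)|\le\pi-\theta\}$ is contained in $\rho(A)$ and $\|R(\lambda,A)\|_{\mathcal{L}(\mathbf{X})}\le M/(1+|\lambda|)$ for $\lambda\in S_{r,\theta}$. *)

theory Defs
  imports "HOL-Analysis.Analysis"
begin

text \<open>Complex Banach spaces: a real Banach space with a compatible complex
  scalar multiplication (HOL-Analysis has no complex vector space class).\<close>
class complex_banach = banach +
  fixes scaleC :: "complex \<Rightarrow> 'a \<Rightarrow> 'a" (infixr \<open>*\<^sub>C\<close> 75)
  assumes scaleC_of_real: "scaleC (of_real r) x = r *\<^sub>R x"
    and scaleC_add_right: "scaleC a (x + y) = scaleC a x + scaleC a y"
    and scaleC_add_left: "scaleC (a + b) x = scaleC a x + scaleC b x"
    and scaleC_scaleC: "scaleC a (scaleC b x) = scaleC (a * b) x"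
    and norm_scaleC: "norm (scaleC a x) = cmod a * norm x"

definition clin :: "('d::complex_banach \<Rightarrow>\<^sub>L 'x::complex_banach) \<Rightarrow> bool" where
  "clin T \<longleftrightarrow> (\<forall>c d. blinfun_apply T (c *\<^sub>C d) = c *\<^sub>C blinfun_apply T d)"

definition cscale :: "complex \<Rightarrow> ('d::complex_banach \<Rightarrow>\<^sub>L 'x::complex_banach) \<Rightarrow> ('d \<Rightarrow>\<^sub>L 'x)" where
  "cscale w T = Blinfun (\<lambda>d. w *\<^sub>C blinfun_apply T d)"

definition sector :: "real \<Rightarrow> real \<Rightarrow> complex set" where
  "sector r \<theta> = {l. l \<noteq> complex_of_real r \<and> \<bar>Arg (l - complex_of_real r)\<bar> \<le> pi - \<theta>}"

text \<open>D is embedded into X by the injective bounded complex-linear map j.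
  An operator T in L(D,X) is viewed as the operator on X with domain j`D,
  x \<mapsto> T (j^-1 x). It is a closed operator whose domain with graph norm
  equals D (equivalent norms; the bound graph norm \<le> C norm_D holds since T is bounded).\<close>
definition closed_op_dom :: "('d::complex_banach \<Rightarrow>\<^sub>L 'x::complex_banach) \<Rightarrow> ('d \<Rightarrow>\<^sub>L 'x) \<Rightarrow> bool" where
  "closed_op_dom j T \<longleftrightarrow> clin T \<and> closed (range (\<lambda>d. (blinfun_apply j d, blinfun_apply T d)))
     \<and> (\<exists>C. \<forall>d. norm d \<le> C * (norm (blinfun_apply T d) + norm (blinfun_apply j d)))"

text \<open>For lambda, (lambda I - T) : D \<rightarrow> X is d \<mapsto> lambda (j d) - T d, and
  R(lambda,T) x = j ((lambda I - T)^-1 x).\<close>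
definition in_S :: "('d::complex_banach \<Rightarrow>\<^sub>L 'x::complex_banach) \<Rightarrow> real \<Rightarrow> real \<Rightarrow> real \<Rightarrow> ('d \<Rightarrow>\<^sub>L 'x) \<Rightarrow> bool" where
  "in_S j M r \<theta> T \<longleftrightarrow> closed_op_dom j T \<and>
     (\<forall>l\<in>sector r \<theta>.
        bij (\<lambda>d. l *\<^sub>C blinfun_apply j d - blinfun_apply T d) \<and>
        (\<forall>x. norm (blinfun_apply j (inv (\<lambda>d. l *\<^sub>C blinfun_apply j d - blinfun_apply T d) x))
              \<le> M / (1 + cmod l) * norm x))"

text \<open>Analytic on a real set: locally a norm-convergent power series whose
  coefficients satisfy P (used for complex-linearity of coefficients).\<close>
definition real_analytic_into :: "('a::real_normed_vector \<Rightarrow> bool) \<Rightarrow> real set \<Rightarrow> (real \<Rightarrow> 'a) \<Rightarrow> bool" where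
  "real_analytic_into P S f \<longleftrightarrow> (\<forall>t0\<in>S. \<exists>e>0. \<exists>c. (\<forall>n. P (c n)) \<and>
     (\<forall>t\<in>S. \<bar>t - t0\<bar> < e \<longrightarrow>
        summable (\<lambda>n. \<bar>t - t0\<bar> ^ n * norm (c n)) \<and> (\<lambda>n. (t - t0) ^ n *\<^sub>R c n) sums f t))"

definition complex_analytic_op :: "complex set \<Rightarrow> (complex \<Rightarrow> ('d::complex_banach \<Rightarrow>\<^sub>L 'x::complex_banach)) \<Rightarrow> bool" where
  "complex_analytic_op U f \<longleftrightarrow> (\<forall>z0\<in>U. \<exists>e>0. \<exists>c. (\<forall>n. clin (c n)) \<and>
     (\<forall>z\<in>U. cmod (z - z0) < e \<longrightarrow>
        summable (\<lambda>n. cmod (z - z0) ^ n * norm (c n)) \<and> (\<lambda>n. cscale ((z - z0) ^ n) (c n)) sums f z))"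

end

theory Submission
  imports Defs
begin

lemma scaleC_zero_left[simp]: "scaleC 0 (x::'a::complex_banach) = 0"
  using scaleC_of_real[of 0 x] by simp

lemma scaleC_one[simp]: "scaleC 1 (x::'a::complex_banach) = x"
  using scaleC_of_real[of 1 x] by simp

lemma scaleC_zero_right[simp]: "scaleC a (0::'a::complex_banach) = 0"
  using scaleC_add_right[of a 0 0] by simp

lemma scaleC_minus_right: "scaleC a (- (x::'a::complex_banach)) = - scaleC a x"
proof -
  have "a *\<^sub>C x + a *\<^sub>C (-x) = 0" using scaleC_add_right[of a x "-x"] by simp
  then show ?thesis by (simp add: neg_eq_iff_add_eq_0[symmetric])
qed

lemma scaleC_diff_right: "scaleC a ((x::'a::complex_banach) - y) = scaleC a x - scaleC a y"
  using scaleC_add_right[of a x "-y"] by (simp add: scaleC_minus_right)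

lemma scaleC_minus_left: "scaleC (- a) (x::'a::complex_banach) = - scaleC a x"
proof -
  have "a *\<^sub>C x + (-a) *\<^sub>C x = 0" using scaleC_add_left[of a "-a" x] by simp
  then show ?thesis by (simp add: neg_eq_iff_add_eq_0[symmetric])
qed

lemma scaleC_diff_left: "scaleC (a - b) (x::'a::complex_banach) = scaleC a x - scaleC b x"
  using scaleC_add_left[of a "-b" x] by (simp add: scaleC_minus_left)

lemma scaleC_scaleR: "scaleC a (r *\<^sub>R (x::'a::complex_banach)) = r *\<^sub>R scaleC a x"
proof -
  have "scaleC a (r *\<^sub>R x) = scaleC a (scaleC (of_real r) x)" by (simp add: scaleC_of_real)
  also have "\<dots> = scaleC (of_real r) (scaleC a x)" by (simp add: scaleC_scaleC mult.commute)
  finally show ?thesis by (simp add: scaleC_of_real)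
qed

lemma bounded_linear_scaleC_right: "bounded_linear (scaleC a :: 'a::complex_banach \<Rightarrow> 'a)"
  apply (rule bounded_linear_intro[where K="cmod a"])
  by (auto simp: scaleC_add_right scaleC_scaleR norm_scaleC mult.commute)

lemma bounded_linear_scaleC_left: "bounded_linear (\<lambda>a. scaleC a (x::'a::complex_banach))"
proof (rule bounded_linear_intro[where K="norm x"])
  fix r :: real and a :: complex
  have "scaleC (r *\<^sub>R a) x = scaleC (of_real r) (scaleC a x)"
    by (simp add: scaleC_scaleC[symmetric] scaleR_conv_of_real)
  then show "scaleC (r *\<^sub>R a) x = r *\<^sub>R scaleC a x" by (simp add: scaleC_of_real)
qed (auto simp: scaleC_add_left norm_scaleC mult.commute)

lemma scaleC_sum_right: "scaleC a (sum f A) = (\<Sum>i\<in>A. scaleC a (f i::'a::complex_banach))"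
  using linear_sum[OF bounded_linear.linear[OF bounded_linear_scaleC_right]] .

lemma scaleC_sum_left: "scaleC (sum f A) (x::'a::complex_banach) = (\<Sum>i\<in>A. scaleC (f i) x)"
  using linear_sum[OF bounded_linear.linear[OF bounded_linear_scaleC_left]] .

lemma sums_scaleC_right: "f sums (s::'a::complex_banach) \<Longrightarrow> (\<lambda>n. scaleC a (f n)) sums scaleC a s"
  using bounded_linear.sums[OF bounded_linear_scaleC_right] .

lemma sums_scaleC_left: "f sums s \<Longrightarrow> (\<lambda>n. scaleC (f n) (x::'a::complex_banach)) sums scaleC s x"
  using bounded_linear.sums[OF bounded_linear_scaleC_left] .

lemma tendsto_scaleC[tendsto_intros]:
  "(f \<longlongrightarrow> a) F \<Longrightarrow> (g \<longlongrightarrow> (x::'a::complex_banach)) F \<Longrightarrow> ((\<lambda>t. scaleC (f t) (g t)) \<longlongrightarrow> scaleC a x) F"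
proof -
  have "bounded_bilinear (scaleC :: complex \<Rightarrow> 'a \<Rightarrow> 'a)"
  proof (rule bounded_bilinear.intro)
    fix a a' :: complex and b b' :: 'a and r :: real
    show "(a + a') *\<^sub>C b = a *\<^sub>C b + a' *\<^sub>C b" by (rule scaleC_add_left)
    show "a *\<^sub>C (b + b') = a *\<^sub>C b + a *\<^sub>C b'" by (rule scaleC_add_right)
    show "(r *\<^sub>R a) *\<^sub>C b = r *\<^sub>R (a *\<^sub>C b)"
      by (rule linear_scale[OF bounded_linear.linear[OF bounded_linear_scaleC_left]])
    show "a *\<^sub>C (r *\<^sub>R b) = r *\<^sub>R (a *\<^sub>C b)" by (rule scaleC_scaleR)
  next
    show "\<exists>K. \<forall>a b. norm (a *\<^sub>C (b::'a)) \<le> norm a * norm b * K"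
      by (rule exI[of _ 1]) (simp add: norm_scaleC)
  qed
  then show "(f \<longlongrightarrow> a) F \<Longrightarrow> (g \<longlongrightarrow> x) F \<Longrightarrow> ((\<lambda>t. scaleC (f t) (g t)) \<longlongrightarrow> scaleC a x) F"
    by (rule bounded_bilinear.tendsto)
qed

lemma cscale_bl: "bounded_linear (\<lambda>d. w *\<^sub>C blinfun_apply (T::'d::complex_banach \<Rightarrow>\<^sub>L 'x::complex_banach) d)"
  by (rule bounded_linear_compose[OF bounded_linear_scaleC_right blinfun.bounded_linear_right])

lemma cscale_apply[simp]: "blinfun_apply (cscale w T) d = w *\<^sub>C blinfun_apply T d"
  unfolding cscale_def by (simp add: bounded_linear_Blinfun_apply[OF cscale_bl])

instantiation blinfun :: (complex_banach, complex_banach) complex_banach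
begin
definition scaleC_blinfun :: "complex \<Rightarrow> ('a \<Rightarrow>\<^sub>L 'b) \<Rightarrow> ('a \<Rightarrow>\<^sub>L 'b)" where
  "scaleC_blinfun = cscale"
instance
proof
  fix r :: real and a b :: complex and x y :: "'a \<Rightarrow>\<^sub>L 'b"
  show "scaleC (of_real r) x = r *\<^sub>R x"
    by (rule blinfun_eqI) (simp add: scaleC_blinfun_def scaleC_of_real blinfun.scaleR_left)
  show "scaleC a (x + y) = scaleC a x + scaleC a y"
    by (rule blinfun_eqI) (simp add: scaleC_blinfun_def scaleC_add_right blinfun.add_left)
  show "scaleC (a + b) x = scaleC a x + scaleC b x"
    by (rule blinfun_eqI) (simp add: scaleC_blinfun_def scaleC_add_left blinfun.add_left)
  show "scaleC a (scaleC b x) = scaleC (a * b) x"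
    by (rule blinfun_eqI) (simp add: scaleC_blinfun_def scaleC_scaleC)
  have le: "norm (cscale c z) \<le> cmod c * norm z" for c and z :: "'a \<Rightarrow>\<^sub>L 'b"
    by (rule norm_blinfun_bound) (auto simp: norm_scaleC mult.assoc intro!: mult_left_mono norm_blinfun)
  show "norm (scaleC a x) = cmod a * norm x"
  proof (cases "a = 0")
    case True
    have "cscale a x = 0" by (rule blinfun_eqI) (simp add: True)
    then show ?thesis unfolding scaleC_blinfun_def using True by simp
  next
    case False
    have eq: "cscale (inverse a) (cscale a x) = x"
      by (rule blinfun_eqI) (simp add: scaleC_scaleC False)
    have "norm x \<le> cmod (inverse a) * norm (cscale a x)" using le[of "inverse a" "cscale a x"] unfolding eq .
    then have "cmod a * norm x \<le> cmod a * (cmod (inverse a) * norm (cscale a x))"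
      by (simp add: mult_left_mono)
    also have "\<dots> = norm (cscale a x)" using False by (simp add: norm_inverse)
    finally have "cmod a * norm x \<le> norm (cscale a x)" .
    with le[of a x] show ?thesis unfolding scaleC_blinfun_def by linarith
  qed
qed
end

lemma scaleC_blinfun_apply[simp]: "blinfun_apply (c *\<^sub>C T) d = c *\<^sub>C blinfun_apply T d"
  by (simp add: scaleC_blinfun_def)

lemma cscale_eq: "cscale = scaleC"
  by (simp add: scaleC_blinfun_def)

lemma ps_summable_le:
  assumes "summable (\<lambda>n. R^n * norm (c n))" "0 \<le> r" "r \<le> R"
  shows "summable (\<lambda>n. r^n * norm (c n))"
proof (rule summable_comparison_test'[OF assms(1)])
  fix n
  have "r^n \<le> R^n" by (rule power_mono) (use assms in auto)
  then show "norm (r^n * norm (c n)) \<le> R^n * norm (c n)"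
    using assms(2) by (simp add: mult_right_mono)
qed

lemma norm_ps_term: "norm (h^n *\<^sub>C (x::'a::complex_banach)) = cmod h ^ n * norm x"
  by (simp add: norm_scaleC norm_power)

lemma ps_summable:
  fixes c :: "nat \<Rightarrow> 'a::complex_banach"
  assumes "summable (\<lambda>n. cmod h^n * norm (c n))"
  shows "summable (\<lambda>n. h^n *\<^sub>C c n)"
  by (rule summable_norm_cancel) (use assms in \<open>simp add: norm_ps_term\<close>)

lemma ps_norm_le:
  fixes c :: "nat \<Rightarrow> 'a::complex_banach"
  assumes "summable (\<lambda>n. cmod h^n * norm (c n))"
  shows "norm (\<Sum>n. h^n *\<^sub>C c n) \<le> (\<Sum>n. cmod h^n * norm (c n))"
proof -
  have "norm (\<Sum>n. h^n *\<^sub>C c n) \<le> (\<Sum>n. norm (h^n *\<^sub>C c n))"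
    by (rule summable_norm) (use assms in \<open>simp add: norm_ps_term\<close>)
  then show ?thesis by (simp add: norm_ps_term)
qed

lemma ps_near0:
  fixes c :: "nat \<Rightarrow> 'a::complex_banach"
  assumes R: "R > 0" and S: "summable (\<lambda>n. R^n * norm (c n))" and h: "cmod h \<le> R"
  shows "norm ((\<Sum>n. h^n *\<^sub>C c n) - c 0) \<le> cmod h / R * (\<Sum>n. R^n * norm (c n))"
proof -
  have sh: "summable (\<lambda>n. cmod h^n * norm (c n))" by (rule ps_summable_le[OF S]) (use h in auto)
  have sf: "summable (\<lambda>n. h^n *\<^sub>C c n)" by (rule ps_summable[OF sh])
  have "(\<Sum>n. h^n *\<^sub>C c n) - c 0 = (\<Sum>n. h^(Suc n) *\<^sub>C c (Suc n))"
    using suminf_split_head[OF sf] by simp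
  also have "norm \<dots> \<le> (\<Sum>n. cmod h^(Suc n) * norm (c (Suc n)))"
  proof -
    have ss: "summable (\<lambda>n. norm (h^(Suc n) *\<^sub>C c (Suc n)))"
      unfolding norm_ps_term using summable_ignore_initial_segment[OF sh, of 1] by (simp only: Suc_eq_plus1)
    have "norm (\<Sum>n. h^(Suc n) *\<^sub>C c (Suc n)) \<le> (\<Sum>n. norm (h^(Suc n) *\<^sub>C c (Suc n)))"
      by (rule summable_norm[OF ss])
    then show ?thesis by (simp only: norm_ps_term)
  qed
  also have "\<dots> \<le> (\<Sum>n. cmod h / R * (R^(Suc n) * norm (c (Suc n))))"
  proof (rule suminf_le)
    show "summable (\<lambda>n. cmod h^(Suc n) * norm (c (Suc n)))"
      using summable_ignore_initial_segment[OF sh, of 1] by simp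
    show "summable (\<lambda>n. cmod h / R * (R^(Suc n) * norm (c (Suc n))))"
      by (rule summable_mult) (use summable_ignore_initial_segment[OF S, of 1] in simp)
    fix n
    have "cmod h ^ Suc n = cmod h * cmod h ^ n" by simp
    also have "\<dots> \<le> cmod h * R^n" by (rule mult_left_mono[OF power_mono]) (use h in auto)
    also have "\<dots> = cmod h / R * R^(Suc n)" using R by simp
    finally have "cmod h^(Suc n) * norm (c (Suc n)) \<le> (cmod h / R * R^(Suc n)) * norm (c (Suc n))"
      by (rule mult_right_mono) simp
    then show "cmod h^(Suc n) * norm (c (Suc n)) \<le> cmod h / R * (R^(Suc n) * norm (c (Suc n)))"
      by (simp only: mult.assoc)
  qed
  also have "\<dots> = cmod h / R * (\<Sum>n. R^(Suc n) * norm (c (Suc n)))"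
    by (rule suminf_mult) (use summable_ignore_initial_segment[OF S, of 1] in simp)
  also have "\<dots> \<le> cmod h / R * (\<Sum>n. R^n * norm (c n))"
  proof (rule mult_left_mono)
    show "(\<Sum>n. R^(Suc n) * norm (c (Suc n))) \<le> (\<Sum>n. R^n * norm (c n))"
      using suminf_split_head[OF S] by simp
  qed (use R in auto)
  finally show ?thesis .
qed

lemma ps_shift_summable:
  assumes R: "R > 0" and S: "summable (\<lambda>n. R^n * norm (c n))"
  shows "summable (\<lambda>n. R^n * norm (c (n + m)))"
proof -
  have "summable (\<lambda>n. inverse (R^m) * (R^(n+m) * norm (c (n + m))))"
    by (rule summable_mult) (rule summable_ignore_initial_segment[OF S])
  then show ?thesis using R by (simp add: power_add field_simps)
qed

lemma ps_unique:
  fixes c c' :: "nat \<Rightarrow> 'a::complex_banach"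
  assumes R: "R > 0" and Sc: "summable (\<lambda>n. R^n * norm (c n))"
    and Sc': "summable (\<lambda>n. R^n * norm (c' n))"
    and lim: "0 islimpt S" and sub: "\<And>h. h \<in> S \<Longrightarrow> cmod h \<le> R"
    and eq: "\<And>h. h \<in> S \<Longrightarrow> (\<Sum>n. h^n *\<^sub>C c n) = (\<Sum>n. h^n *\<^sub>C c' n)"
  shows "c = c'"
proof -
  define b where "b n = c n - c' n" for n
  have Sb: "summable (\<lambda>n. R^n * norm (b n))"
  proof (rule summable_comparison_test'[OF summable_add[OF Sc Sc']])
    fix n
    have "norm (b n) \<le> norm (c n) + norm (c' n)" unfolding b_def by (rule norm_triangle_ineq4)
    then show "norm (R^n * norm (b n)) \<le> R^n * norm (c n) + R^n * norm (c' n)"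
      using R by (simp add: distrib_left[symmetric] mult_left_mono)
  qed
  have zero: "(\<Sum>n. h^n *\<^sub>C b n) = 0" if hS: "h \<in> S" for h
  proof -
    have s1: "summable (\<lambda>n. h^n *\<^sub>C c n)"
      by (rule ps_summable[OF ps_summable_le[OF Sc]]) (use sub[OF hS] in auto)
    have s2: "summable (\<lambda>n. h^n *\<^sub>C c' n)"
      by (rule ps_summable[OF ps_summable_le[OF Sc']]) (use sub[OF hS] in auto)
    have "(\<Sum>n. h^n *\<^sub>C b n) = (\<Sum>n. h^n *\<^sub>C c n) - (\<Sum>n. h^n *\<^sub>C c' n)"
      unfolding b_def scaleC_diff_right by (rule suminf_diff[OF s1 s2, symmetric])
    then show ?thesis using eq[OF hS] by simp
  qed
  have "b m = 0" for m
  proof (induction m rule: less_induct)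
    case (less m)
    define K where "K = (\<Sum>n. R^n * norm (b (n + m)))"
    have SK: "summable (\<lambda>n. R^n * norm (b (n + m)))" by (rule ps_shift_summable[OF R Sb])
    have K0: "K \<ge> 0" unfolding K_def by (rule suminf_nonneg[OF SK]) (use R in simp)
    have bound: "norm (b m) \<le> cmod h / R * K" if hS: "h \<in> S" and hne: "h \<noteq> 0" for h
    proof -
      have shb: "summable (\<lambda>n. cmod h^n * norm (b n))"
        by (rule ps_summable_le[OF Sb]) (use sub[OF hS] in auto)
      have sf: "summable (\<lambda>n. h^n *\<^sub>C b n)" by (rule ps_summable[OF shb])
      have "(\<Sum>n. h^n *\<^sub>C b n) = (\<Sum>n. h^(n+m) *\<^sub>C b (n+m)) + (\<Sum>i<m. h^i *\<^sub>C b i)"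
        by (rule suminf_split_initial_segment[OF sf])
      also have "(\<Sum>i<m. h^i *\<^sub>C b i) = 0" using less by simp
      also have "(\<Sum>n. h^(n+m) *\<^sub>C b (n+m)) = h^m *\<^sub>C (\<Sum>n. h^n *\<^sub>C b (n+m))"
      proof -
        have "summable (\<lambda>n. h^n *\<^sub>C b (n+m))"
          by (rule ps_summable[OF ps_summable_le[OF ps_shift_summable[OF R Sb]]]) (use sub[OF hS] in auto)
        then have "(\<lambda>n. h^m *\<^sub>C (h^n *\<^sub>C b (n+m))) sums (h^m *\<^sub>C (\<Sum>n. h^n *\<^sub>C b (n+m)))"
          by (intro sums_scaleC_right summable_sums)
        then show ?thesis by (simp add: sums_iff scaleC_scaleC power_add mult.commute)
      qed
      finally have "h^m *\<^sub>C (\<Sum>n. h^n *\<^sub>C b (n+m)) = 0" using zero[OF hS] by simp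
      then have "inverse (h^m) *\<^sub>C (h^m *\<^sub>C (\<Sum>n. h^n *\<^sub>C b (n+m))) = 0" by simp
      then have z: "(\<Sum>n. h^n *\<^sub>C b (n+m)) = 0" using hne by (simp add: scaleC_scaleC)
      have "norm ((\<Sum>n. h^n *\<^sub>C b (n+m)) - b (0 + m)) \<le> cmod h / R * K"
        unfolding K_def by (rule ps_near0[OF R SK sub[OF hS]])
      then show ?thesis using z by simp
    qed
    show "b m = 0"
    proof (rule ccontr)
      assume "b m \<noteq> 0"
      then have nb: "norm (b m) > 0" by simp
      define e where "e = norm (b m) * R / (K + 1)"
      have e: "e > 0" unfolding e_def using nb R K0 by simp
      obtain h where hS: "h \<in> S" and hne: "h \<noteq> 0" and hd: "dist h 0 < e"
        using lim e unfolding islimpt_approachable by blast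
      have "norm (b m) \<le> cmod h / R * K" by (rule bound[OF hS hne])
      also have "\<dots> \<le> e / R * K"
        using hd R K0 by (intro mult_right_mono divide_right_mono) auto
      also have "\<dots> < norm (b m)"
      proof -
        have k1: "K + 1 \<noteq> 0" using K0 by simp
        have kr: "R + K * R \<noteq> 0" using R K0 by (metis add_pos_nonneg less_irrefl mult_nonneg_nonneg less_imp_le)
        have eR: "e / R = norm (b m) / (K + 1)" unfolding e_def using R k1 kr by (simp add: field_simps)
        have "norm (b m) / (K + 1) * K < norm (b m)" using nb K0 by (simp add: field_simps)
        then show ?thesis using eR by simp
      qed
      finally show False by simp
    qed
  qed
  then show ?thesis unfolding b_def by (auto simp: fun_eq_iff)
qed

lemma has_sum_upto:
  fixes f :: "nat \<Rightarrow> 'a::{comm_monoid_add, topological_space}"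
  assumes "\<And>m. m > n \<Longrightarrow> f m = 0"
  shows "(f has_sum (\<Sum>m\<le>n. f m)) UNIV"
proof -
  have "(f has_sum (\<Sum>m\<le>n. f m)) {..n}" by (rule has_sum_finite) simp
  moreover have "(f has_sum (\<Sum>m\<le>n. f m)) {..n} \<longleftrightarrow> (f has_sum (\<Sum>m\<le>n. f m)) UNIV"
    by (rule has_sum_cong_neutral) (use assms in auto)
  ultimately show ?thesis by simp
qed

lemma norm_summable_has_sum:
  fixes f :: "nat \<Rightarrow> 'a::banach"
  assumes "summable (\<lambda>n. norm (f n))"
  shows "(f has_sum (\<Sum>n. f n)) UNIV"
  by (rule norm_summable_imp_has_sum[OF assms summable_sums[OF summable_norm_cancel[OF assms]]])

lemma binom_le:
  fixes x y :: real
  assumes "0 \<le> x" "0 \<le> y"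
  shows "of_nat (n choose m) * x^m * y^(n-m) \<le> (x + y)^n"
proof (cases "m \<le> n")
  case True
  have "of_nat (n choose m) * x^m * y^(n-m) \<le> (\<Sum>k\<le>n. of_nat (n choose k) * x^k * y^(n-k))"
    by (rule member_le_sum) (use True assms in auto)
  then show ?thesis by (simp add: binomial_ring)
next
  case False then show ?thesis using assms by (simp add: binomial_eq_0)
qed

lemma coeff_summable:
  fixes c :: "nat \<Rightarrow> 'a::complex_banach"
  assumes S: "summable (\<lambda>n. R^n * norm (c n))" and a: "cmod a < R"
  shows "summable (\<lambda>n. of_nat (n choose m) * cmod a^(n-m) * norm (c n))"
proof -
  define \<delta> where "\<delta> = R - cmod a"
  have d: "\<delta> > 0" using a unfolding \<delta>_def by simp
  show ?thesis
  proof (rule summable_comparison_test'[OF summable_mult[OF S, of "inverse (\<delta>^m)"]])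
    fix n
    have "of_nat (n choose m) * \<delta>^m * cmod a^(n-m) \<le> (\<delta> + cmod a)^n"
      by (rule binom_le) (use d in auto)
    then have "of_nat (n choose m) * cmod a^(n-m) \<le> inverse (\<delta>^m) * R^n"
      using d unfolding \<delta>_def by (simp add: field_simps)
    then have "of_nat (n choose m) * cmod a^(n-m) * norm (c n) \<le> inverse (\<delta>^m) * R^n * norm (c n)"
      by (rule mult_right_mono) simp
    then show "norm (of_nat (n choose m) * cmod a^(n-m) * norm (c n)) \<le> inverse (\<delta>^m) * (R^n * norm (c n))"
      by (simp add: mult.assoc)
  qed
qed

lemma reexpand:
  fixes c :: "nat \<Rightarrow> 'a::complex_banach"
  assumes S: "summable (\<lambda>n. R^n * norm (c n))" and a: "cmod a < R" and ah: "cmod a + cmod h \<le> R"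
  defines "d \<equiv> \<lambda>m. \<Sum>n. (of_nat (n choose m) * a^(n-m)) *\<^sub>C c n"
  shows "summable (\<lambda>m. cmod h^m * norm (d m))"
    and "(\<lambda>m. h^m *\<^sub>C d m) sums (\<Sum>n. (a+h)^n *\<^sub>C c n)"
proof -
  define F where "F n m = (of_nat (n choose m) * a^(n-m) * h^m) *\<^sub>C c n" for n m
  define G where "G n m = of_nat (n choose m) * cmod a^(n-m) * cmod h^m * norm (c n)" for n m
  have normF: "norm (F n m) = G n m" for n m
    unfolding F_def G_def by (simp add: norm_scaleC norm_mult norm_power)
  have G0: "G n m \<ge> 0" for n m unfolding G_def by simp
  have rowG: "((\<lambda>m. G n m) has_sum ((cmod a + cmod h)^n * norm (c n))) UNIV" for n
  proof -
    have "((\<lambda>m. G n m) has_sum (\<Sum>m\<le>n. G n m)) UNIV"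
      by (rule has_sum_upto) (simp add: G_def)
    moreover have "(\<Sum>m\<le>n. G n m) = (cmod h + cmod a)^n * norm (c n)"
      unfolding G_def binomial_ring sum_distrib_right by (rule sum.cong) (auto simp: mult_ac)
    ultimately show ?thesis by (simp add: add.commute)
  qed
  have sumR: "summable (\<lambda>n. (cmod a + cmod h)^n * norm (c n))"
    by (rule ps_summable_le[OF S]) (use ah in auto)
  have rowsum: "(\<lambda>n. (cmod a + cmod h)^n * norm (c n)) summable_on UNIV"
    by (rule summable_nonneg_imp_summable_on[OF sumR]) simp
  have Fabs: "(\<lambda>(n,m). F n m) abs_summable_on UNIV \<times> UNIV"
  proof (rule summable_on_SigmaI[where g="\<lambda>n. (cmod a + cmod h)^n * norm (c n)"])
    fix n :: nat
    show "((\<lambda>m. norm ((\<lambda>(n,m). F n m) (n, m))) has_sum (cmod a + cmod h)^n * norm (c n)) UNIV"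
      using rowG[of n] by (simp add: normF)
  next
    show "(\<lambda>n. (cmod a + cmod h)^n * norm (c n)) summable_on UNIV" by (rule rowsum)
  qed simp
  have Fsum: "(\<lambda>(n,m). F n m) summable_on UNIV \<times> UNIV"
    by (rule abs_summable_summable[OF Fabs])
  have swap: "infsum (\<lambda>n. infsum (\<lambda>m. F n m) UNIV) UNIV = infsum (\<lambda>m. infsum (\<lambda>n. F n m) UNIV) UNIV"
    by (rule infsum_swap_banach[OF Fsum])
  have rowF: "infsum (\<lambda>m. F n m) UNIV = (a+h)^n *\<^sub>C c n" for n
  proof -
    have "((\<lambda>m. F n m) has_sum (\<Sum>m\<le>n. F n m)) UNIV"
      by (rule has_sum_upto) (simp add: F_def binomial_eq_0)
    moreover have "(\<Sum>m\<le>n. F n m) = (h + a)^n *\<^sub>C c n"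
      unfolding F_def binomial_ring scaleC_sum_left by (rule sum.cong) (auto simp: mult_ac)
    ultimately show ?thesis by (simp add: add.commute infsumI)
  qed
  have sAH: "summable (\<lambda>n. norm ((a+h)^n *\<^sub>C c n))"
  proof -
    have "summable (\<lambda>n. cmod (a+h)^n * norm (c n))"
      by (rule ps_summable_le[OF S]) (use ah norm_triangle_ineq[of a h] in auto)
    then show ?thesis by (simp add: norm_ps_term)
  qed
  have L: "infsum (\<lambda>n. infsum (\<lambda>m. F n m) UNIV) UNIV = (\<Sum>n. (a+h)^n *\<^sub>C c n)"
    unfolding rowF by (rule infsumI[OF norm_summable_has_sum[OF sAH]])
  have colsum: "summable (\<lambda>n. norm ((of_nat (n choose m) * a^(n-m)) *\<^sub>C c n))" for m
    using coeff_summable[OF S a, of m] by (simp add: norm_scaleC norm_mult norm_power)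
  have colF: "infsum (\<lambda>n. F n m) UNIV = h^m *\<^sub>C d m" for m
  proof -
    have "((\<lambda>n. (of_nat (n choose m) * a^(n-m)) *\<^sub>C c n) has_sum d m) UNIV"
      unfolding d_def by (rule norm_summable_has_sum[OF colsum])
    from has_sum_bounded_linear[OF bounded_linear_scaleC_right this, of "h^m"]
    have "((\<lambda>n. F n m) has_sum h^m *\<^sub>C d m) UNIV"
      by (simp add: F_def scaleC_scaleC mult_ac)
    then show ?thesis by (rule infsumI)
  qed
  have Gswap: "(\<lambda>(m,n). norm (F n m)) summable_on UNIV \<times> UNIV"
  proof -
    have "(\<lambda>(n,m). norm (F n m)) summable_on UNIV \<times> UNIV" using Fabs by (simp add: case_prod_unfold)
    then show ?thesis by (subst summable_on_swap) (simp add: case_prod_unfold)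
  qed
  have colG: "(\<lambda>m. infsum (\<lambda>n. norm (F n m)) UNIV) summable_on UNIV"
    using summable_on_Sigma_banach[of "\<lambda>m n. norm (F n m)" UNIV "\<lambda>_. UNIV"] Gswap by simp
  have colGs: "summable (\<lambda>m. infsum (\<lambda>n. norm (F n m)) UNIV)"
    by (rule summable_on_imp_summable[OF colG])
  show sd: "summable (\<lambda>m. cmod h^m * norm (d m))"
  proof (rule summable_comparison_test'[OF colGs])
    fix m
    have cs: "summable (\<lambda>n. of_nat (n choose m) * cmod a^(n-m) * norm (c n))"
      by (rule coeff_summable[OF S a])
    have "norm (d m) \<le> (\<Sum>n. norm ((of_nat (n choose m) * a^(n-m)) *\<^sub>C c n))"
      unfolding d_def by (rule summable_norm[OF colsum])
    also have "\<dots> = (\<Sum>n. of_nat (n choose m) * cmod a^(n-m) * norm (c n))"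
      by (simp add: norm_scaleC norm_mult norm_power)
    finally have nd: "norm (d m) \<le> (\<Sum>n. of_nat (n choose m) * cmod a^(n-m) * norm (c n))" .
    have eqf: "(\<lambda>n. norm (F n m)) = (\<lambda>n. cmod h^m * (of_nat (n choose m) * cmod a^(n-m) * norm (c n)))"
      by (simp add: normF G_def fun_eq_iff mult_ac)
    have "infsum (\<lambda>n. norm (F n m)) UNIV = (\<Sum>n. cmod h^m * (of_nat (n choose m) * cmod a^(n-m) * norm (c n)))"
      unfolding eqf by (rule infsumI[OF norm_summable_has_sum]) (use summable_mult[OF cs, of "cmod h^m"] in simp)
    also have "\<dots> = cmod h^m * (\<Sum>n. of_nat (n choose m) * cmod a^(n-m) * norm (c n))"
      by (rule suminf_mult[OF cs])
    finally have "cmod h^m * norm (d m) \<le> infsum (\<lambda>n. norm (F n m)) UNIV"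
      using nd by (simp add: mult_left_mono)
    then show "norm (cmod h^m * norm (d m)) \<le> infsum (\<lambda>n. norm (F n m)) UNIV" by simp
  qed
  have sd': "summable (\<lambda>m. norm (h^m *\<^sub>C d m))" using sd by (simp add: norm_ps_term)
  have "infsum (\<lambda>m. infsum (\<lambda>n. F n m) UNIV) UNIV = (\<Sum>m. h^m *\<^sub>C d m)"
    unfolding colF by (rule infsumI[OF norm_summable_has_sum[OF sd']])
  with swap L have "(\<Sum>m. h^m *\<^sub>C d m) = (\<Sum>n. (a+h)^n *\<^sub>C c n)" by simp
  then show "(\<lambda>m. h^m *\<^sub>C d m) sums (\<Sum>n. (a+h)^n *\<^sub>C c n)"
    using summable_sums[OF summable_norm_cancel[OF sd']] by simp
qed

lemma clinD: "clin T \<Longrightarrow> blinfun_apply T (c *\<^sub>C d) = c *\<^sub>C blinfun_apply T d"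
  unfolding clin_def by blast

lemma clin_add: "clin S \<Longrightarrow> clin T \<Longrightarrow> clin (S + T)"
  unfolding clin_def by (simp add: blinfun.add_left scaleC_add_right)

lemma clin_diff: "clin S \<Longrightarrow> clin T \<Longrightarrow> clin (S - T)"
  unfolding clin_def by (simp add: blinfun.diff_left scaleC_diff_right)

lemma clin_minus: "clin T \<Longrightarrow> clin (- T)"
  unfolding clin_def by (simp add: blinfun.minus_left scaleC_minus_right)

lemma clin_zero: "clin 0"
  unfolding clin_def by simp

lemma clin_scaleC: "clin T \<Longrightarrow> clin (a *\<^sub>C T)"
  unfolding clin_def by (simp add: scaleC_scaleC mult.commute)

lemma clin_scaleR: "clin T \<Longrightarrow> clin (a *\<^sub>R T)"
  unfolding clin_def by (simp add: scaleC_scaleR blinfun.scaleR_left)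

lemma clin_compose: "clin S \<Longrightarrow> clin T \<Longrightarrow> clin (S o\<^sub>L T)"
  unfolding clin_def by simp

lemma clin_sum: "(\<And>i. i \<in> A \<Longrightarrow> clin (f i)) \<Longrightarrow> clin (sum f A)"
  by (induction A rule: infinite_finite_induct) (auto intro: clin_zero clin_add)

lemma clin_suminf:
  assumes s: "summable f" and c: "\<And>n. clin (f n)"
  shows "clin (suminf f)"
  unfolding clin_def
proof (intro allI)
  fix a d
  have app: "blinfun_apply (suminf f) x = (\<Sum>n. blinfun_apply (f n) x)" for x
    by (rule bounded_linear.suminf[OF blinfun.bounded_linear_left s])
  have sx: "summable (\<lambda>n. blinfun_apply (f n) d)"
    by (rule bounded_linear.summable[OF blinfun.bounded_linear_left s])
  have "a *\<^sub>C (\<Sum>n. blinfun_apply (f n) d) = (\<Sum>n. a *\<^sub>C blinfun_apply (f n) d)"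
    by (rule bounded_linear.suminf[OF bounded_linear_scaleC_right sx])
  then show "blinfun_apply (suminf f) (a *\<^sub>C d) = a *\<^sub>C blinfun_apply (suminf f) d"
    using c by (simp add: app clinD)
qed

lemma zero_in_sector:
  assumes "r < 0" "0 < \<theta>" "\<theta> < pi / 2"
  shows "0 \<in> sector r \<theta>"
  unfolding sector_def using assms by (simp add: of_real_minus[symmetric] del: of_real_minus)

lemma bij_inv_facts:
  assumes "bij f"
  shows "f (inv f x) = x" "inv f (f y) = y"
  using assms by (auto simp: bij_is_surj bij_is_inj surj_f_inv_f inv_f_f)

lemma perturb:
  fixes j T T' :: "'d::complex_banach \<Rightarrow>\<^sub>L 'x::complex_banach"
  assumes S: "in_S j M r \<theta> T" and M: "M > 0" and K: "K \<ge> 0"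
    and Kb: "\<And>d. norm d \<le> K * norm (T d)"
    and cl: "clin T'" and small: "norm (T' - T) * (K * (M + 1)) \<le> 1/2"
  shows "in_S j (2*M) r \<theta> T'"
proof -
  define E where "E = T' - T"
  have Ed: "T' d = T d + E d" for d unfolding E_def by (simp add: blinfun.diff_left)
  have EK: "norm E * K \<le> 1/2"
  proof -
    have "norm E * K \<le> norm E * (K * (M + 1))"
      using M K by (intro mult_left_mono) (auto simp: mult_le_cancel_left1)
    then show ?thesis using small unfolding E_def by linarith
  qed
  have Enorm: "norm (E d) \<le> norm E * norm d" for d by (rule norm_blinfun)
  have bnd: "norm d \<le> 2 * K * norm (T' d)" for d
  proof -
    have "T d = T' d - E d" using Ed[of d] by simp
    then have "norm (T d) \<le> norm (T' d) + norm (E d)" by (metis norm_triangle_ineq4)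
    then have "K * norm (T d) \<le> K * norm (T' d) + K * (norm E * norm d)"
      using K Enorm[of d] by (metis distrib_left mult_left_mono order_trans add_left_mono)
    moreover have "K * (norm E * norm d) \<le> 1/2 * norm d"
    proof -
      have "K * (norm E * norm d) = (norm E * K) * norm d" by simp
      also have "\<dots> \<le> 1/2 * norm d" by (rule mult_right_mono[OF EK]) simp
      finally show ?thesis .
    qed
    ultimately show ?thesis using Kb[of d] by linarith
  qed
  have closedT: "closed_op_dom j T'"
    unfolding closed_op_dom_def
  proof (intro conjI)
    show "clin T'" by (rule cl)
    show "\<exists>C. \<forall>d. norm d \<le> C * (norm (T' d) + norm (j d))"
    proof (intro exI allI)
      fix d
      have "norm d \<le> 2 * K * norm (T' d)" by (rule bnd)
      also have "\<dots> \<le> 2 * K * (norm (T' d) + norm (j d))" using K by (intro mult_left_mono) auto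
      finally show "norm d \<le> 2 * K * (norm (T' d) + norm (j d))" .
    qed
    show "closed (range (\<lambda>d. (blinfun_apply j d, blinfun_apply T' d)))"
    proof -
      have bl: "bounded_linear (\<lambda>d. (blinfun_apply j d, blinfun_apply T' d))"
        by (intro bounded_linear_Pair blinfun.bounded_linear_right)
      have "complete ((\<lambda>d. (blinfun_apply j d, blinfun_apply T' d)) ` UNIV)"
      proof (rule complete_isometric_image[OF _ subspace_UNIV bl])
        show "0 < 1 / (2 * K + 1)" using K by simp
        show "\<forall>x\<in>UNIV. 1 / (2 * K + 1) * norm x \<le> norm (blinfun_apply j x, blinfun_apply T' x)"
        proof
          fix x :: 'd
          have "norm x \<le> 2 * K * norm (T' x)" by (rule bnd)
          also have "\<dots> \<le> (2 * K + 1) * norm (blinfun_apply j x, blinfun_apply T' x)"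
            using K norm_snd_le[of "blinfun_apply T' x" "blinfun_apply j x"]
            by (intro mult_mono) auto
          finally show "1 / (2 * K + 1) * norm x \<le> norm (blinfun_apply j x, blinfun_apply T' x)"
            using K by (simp add: field_simps)
        qed
        show "complete (UNIV :: 'd set)" by (rule complete_UNIV)
      qed
      then show ?thesis by (rule complete_imp_closed)
    qed
  qed
  have res: "bij (\<lambda>d. l *\<^sub>C j d - T' d) \<and>
        (\<forall>x. norm (j (inv (\<lambda>d. l *\<^sub>C j d - T' d) x)) \<le> 2 * M / (1 + cmod l) * norm x)"
    if l: "l \<in> sector r \<theta>" for l
  proof -
    define L where "L d = l *\<^sub>C j d - T d" for d
    define L' where "L' d = l *\<^sub>C j d - T' d" for d
    define S0 where "S0 = inv L"
    have bijL: "bij L" and bndL: "\<And>x. norm (j (S0 x)) \<le> M / (1 + cmod l) * norm x"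
      using S l unfolding in_S_def L_def[abs_def] S0_def by auto
    have LS: "L (S0 x) = x" for x unfolding S0_def by (rule bij_inv_facts(1)[OF bijL])
    have SL: "S0 (L d) = d" for d unfolding S0_def by (rule bij_inv_facts(2)[OF bijL])
    have Ldiff: "L (d1 - d2) = L d1 - L d2" for d1 d2
      unfolding L_def by (simp add: blinfun.diff_right scaleC_diff_right)
    have L'eq: "L' d = L d - E d" for d unfolding L'_def L_def using Ed[of d] by simp
    have L'diff: "L' (d1 - d2) = L' d1 - L' d2" for d1 d2
      unfolding L'_def by (simp add: blinfun.diff_right scaleC_diff_right)
    have Sdiff: "S0 x - S0 y = S0 (x - y)" for x y
    proof -
      have "L (S0 x - S0 y) = L (S0 (x - y))" by (simp add: Ldiff LS)
      then show ?thesis using SL by metis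
    qed
    have S00: "S0 0 = 0" using Sdiff[of 0 0] by simp
    have Sb: "norm (S0 x) \<le> K * (M + 1) * norm x" for x
    proof -
      have "T (S0 x) = l *\<^sub>C j (S0 x) - x" using LS[of x] unfolding L_def by (simp add: algebra_simps)
      then have "norm (T (S0 x)) \<le> cmod l * norm (j (S0 x)) + norm x"
        by (metis norm_triangle_ineq4 norm_scaleC)
      also have "cmod l * norm (j (S0 x)) \<le> cmod l * (M / (1 + cmod l) * norm x)"
        by (intro mult_left_mono bndL) auto
      also have "\<dots> \<le> M * norm x"
      proof -
        have p: "0 < 1 + cmod l" by (simp add: add_pos_nonneg)
        have "cmod l * M \<le> M * (1 + cmod l)" using M by (simp add: algebra_simps)
        then have "cmod l * M / (1 + cmod l) \<le> M" using p by (simp add: pos_divide_le_eq)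
        then have "cmod l * (M / (1 + cmod l)) \<le> M" by simp
        then have "cmod l * (M / (1 + cmod l)) * norm x \<le> M * norm x"
          by (rule mult_right_mono[OF _ norm_ge_zero])
        then show ?thesis by (simp only: mult.assoc)
      qed
      finally have "norm (T (S0 x)) \<le> (M + 1) * norm x" by (simp add: algebra_simps)
      then have "K * norm (T (S0 x)) \<le> K * ((M + 1) * norm x)" using K by (rule mult_left_mono)
      then show ?thesis using Kb[of "S0 x"] by (simp add: mult.assoc)
    qed
    have contr: "norm (E (S0 w)) \<le> 1/2 * norm w" for w
    proof -
      have "norm (E (S0 w)) \<le> norm E * (K * (M + 1) * norm w)"
        using Enorm[of "S0 w"] Sb[of w] by (meson norm_ge_zero mult_left_mono order_trans)
      also have "\<dots> = (norm E * (K * (M + 1))) * norm w" by simp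
      also have "\<dots> \<le> 1/2 * norm w" using small unfolding E_def by (intro mult_right_mono) auto
      finally show ?thesis .
    qed
    have fixp: "\<exists>w. y + E (S0 w) = w" for y
    proof -
      have "\<exists>!w. y + E (S0 w) = w"
      proof (rule banach_fix_type[of "1/2"])
        show "\<forall>x z. dist (y + E (S0 x)) (y + E (S0 z)) \<le> 1/2 * dist x z"
        proof (intro allI)
          fix x z
          have "dist (y + E (S0 x)) (y + E (S0 z)) = norm (E (S0 (x - z)))"
            by (simp add: dist_norm Sdiff[symmetric] blinfun.diff_right)
          also have "\<dots> \<le> 1/2 * norm (x - z)" by (rule contr)
          finally show "dist (y + E (S0 x)) (y + E (S0 z)) \<le> 1/2 * dist x z" by (simp add: dist_norm)
        qed
      qed auto
      then show ?thesis by blast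
    qed
    have surj: "L' (S0 w) = y" if "y + E (S0 w) = w" for y w
    proof -
      have "L' (S0 w) = w - E (S0 w)" by (simp add: L'eq LS)
      also have "\<dots> = y" using that by (metis add_diff_cancel_right')
      finally show ?thesis .
    qed
    have injL': "inj L'"
    proof (rule injI)
      fix d1 d2 assume "L' d1 = L' d2"
      then have z: "L' (d1 - d2) = 0" by (simp add: L'diff)
      define w where "w = L (d1 - d2)"
      have dw: "d1 - d2 = S0 w" unfolding w_def by (simp add: SL)
      have "L (d1 - d2) - E (d1 - d2) = 0" using z by (simp add: L'eq)
      then have w1: "w = E (d1 - d2)" unfolding w_def by simp
      have "w = E (S0 w)" unfolding dw[symmetric] by (rule w1)
      then have "norm w = norm (E (S0 w))" by (rule arg_cong[where f=norm])
      then have "norm w \<le> 0" using contr[of w] by linarith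
      then have "w = 0" by simp
      then show "d1 = d2" using dw S00 by simp
    qed
    have surjL': "surj L'"
    proof -
      have "y \<in> range L'" for y using fixp[of y] surj by blast
      then show ?thesis by blast
    qed
    have bijL': "bij L'" using injL' surjL' by (simp add: bij_def)
    have bound: "norm (j (inv L' y)) \<le> 2 * M / (1 + cmod l) * norm y" for y
    proof -
      obtain w where w: "y + E (S0 w) = w" using fixp by blast
      have "inv L' y = S0 w" using surj[OF w] bij_inv_facts(2)[OF bijL', of "S0 w"] by simp
      moreover have nw: "norm w \<le> 2 * norm y"
      proof -
        have "norm w \<le> norm y + norm (E (S0 w))" using w by (metis norm_triangle_ineq)
        then show ?thesis using contr[of w] by linarith
      qed
      have p: "1 + cmod l \<noteq> 0" "0 < 1 + cmod l" using norm_ge_zero[of l] by linarith+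
      have nn: "0 \<le> M / (1 + cmod l)" using M p by simp
      have "norm (j (S0 w)) \<le> M / (1 + cmod l) * norm w" by (rule bndL)
      also have "\<dots> \<le> M / (1 + cmod l) * (2 * norm y)" by (rule mult_left_mono[OF nw nn])
      also have "\<dots> = 2 * M / (1 + cmod l) * norm y" using p by (simp add: field_simps)
      finally show ?thesis using \<open>inv L' y = S0 w\<close> by simp
    qed
    show ?thesis using bijL' bound unfolding L'_def[abs_def] by simp
  qed
  show ?thesis unfolding in_S_def using closedT res by blast
qed

declare of_real_diff[simp del]

lemma real_scaleC: "(complex_of_real x)^n *\<^sub>C (v::'a::complex_banach) = x^n *\<^sub>R v"
  by (simp only: of_real_power[symmetric] scaleC_of_real)

lemma limpt_S:
  assumes t: "t \<in> {0..1}" and R: "R > 0"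
  shows "0 islimpt {complex_of_real (t' - t) | t'. t' \<in> {0..1} \<and> \<bar>t' - t\<bar> < R}"
  unfolding islimpt_approachable
proof (intro allI impI)
  fix e :: real assume e: "e > 0"
  define \<delta> where "\<delta> = min (min e R) 1 / 2"
  have d: "0 < \<delta>" "\<delta> < e" "\<delta> < R" "\<delta> \<le> 1/2" using e R unfolding \<delta>_def by auto
  define t' where "t' = (if t \<le> 1/2 then t + \<delta> else t - \<delta>)"
  have t': "t' \<in> {0..1}" "\<bar>t' - t\<bar> = \<delta>" using t d unfolding t'_def by auto
  show "\<exists>x'\<in>{complex_of_real (t' - t) | t'. t' \<in> {0..1} \<and> \<bar>t' - t\<bar> < R}. x' \<noteq> 0 \<and> dist x' 0 < e"
  proof (intro bexI conjI)
    show "complex_of_real (t' - t) \<noteq> 0" using t' d by auto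
    show "dist (complex_of_real (t' - t)) 0 < e" using t' d by simp
    show "complex_of_real (t' - t) \<in> {complex_of_real (t' - t) | t'. t' \<in> {0..1} \<and> \<bar>t' - t\<bar> < R}"
      using t' d by auto
  qed
qed

lemma transfer:
  fixes c0 c1 :: "nat \<Rightarrow> 'a::complex_banach" and A :: "real \<Rightarrow> 'a"
  assumes R0: "R0 > 0" and S0: "summable (\<lambda>n. R0^n * norm (c0 n))"
    and rep0': "\<forall>t'\<in>{0..1}. \<bar>t' - t0\<bar> < R0 \<longrightarrow> (\<Sum>n. (complex_of_real (t' - t0))^n *\<^sub>C c0 n) = A t'"
    and R1: "R1 > 0" and S1: "summable (\<lambda>n. R1^n * norm (c1 n))"
    and rep1': "\<forall>t'\<in>{0..1}. \<bar>t' - t1\<bar> < R1 \<longrightarrow> (\<Sum>n. (complex_of_real (t' - t1))^n *\<^sub>C c1 n) = A t'"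
    and t1: "t1 \<in> {0..1}" and t01: "\<bar>t1 - t0\<bar> < R0"
  shows "summable (\<lambda>n. (R0 - \<bar>t1 - t0\<bar>)^n * norm (c1 n))"
    and "\<And>z. cmod (z - complex_of_real t1) + \<bar>t1 - t0\<bar> \<le> R0 \<Longrightarrow>
          (\<Sum>n. (z - complex_of_real t1)^n *\<^sub>C c1 n) = (\<Sum>n. (z - complex_of_real t0)^n *\<^sub>C c0 n)"
proof -
  note rep0 = rep0'[rule_format] and rep1 = rep1'[rule_format]
  define a where "a = complex_of_real (t1 - t0)"
  have ca: "cmod a = \<bar>t1 - t0\<bar>" unfolding a_def by simp
  have a: "cmod a < R0" using t01 ca by simp
  define d where "d m = (\<Sum>n. (of_nat (n choose m) * a^(n-m)) *\<^sub>C c0 n)" for m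
  have re1: "summable (\<lambda>m. cmod h^m * norm (d m))" if "cmod a + cmod h \<le> R0" for h
    using reexpand(1)[OF S0 a that] unfolding d_def .
  have re2: "(\<lambda>m. h^m *\<^sub>C d m) sums (\<Sum>n. (a+h)^n *\<^sub>C c0 n)" if "cmod a + cmod h \<le> R0" for h
    using reexpand(2)[OF S0 a that] unfolding d_def .
  define R' where "R' = min R1 (R0 - cmod a)"
  have R': "R' > 0" "R' \<le> R1" "cmod a + R' \<le> R0" using R1 a unfolding R'_def by auto
  define S where "S = {complex_of_real (t' - t1) | t'. t' \<in> {0..1} \<and> \<bar>t' - t1\<bar> < R'}"
  have dc: "d = c1"
  proof (rule ps_unique[OF R'(1) _ _ _ _ _, of d c1 S])
    show "summable (\<lambda>n. R'^n * norm (d n))"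
      using re1[of "complex_of_real R'"] R' by simp
    show "summable (\<lambda>n. R'^n * norm (c1 n))"
      by (rule ps_summable_le[OF S1]) (use R' in auto)
    show "0 islimpt S" unfolding S_def by (rule limpt_S[OF t1 R'(1)])
    show "cmod h \<le> R'" if "h \<in> S" for h using that unfolding S_def by auto
    show "(\<Sum>n. h^n *\<^sub>C d n) = (\<Sum>n. h^n *\<^sub>C c1 n)" if "h \<in> S" for h
    proof -
      obtain t' where t': "t' \<in> {0..1}" "\<bar>t' - t1\<bar> < R'" and h: "h = complex_of_real (t' - t1)"
        using \<open>h \<in> S\<close> unfolding S_def by auto
      have ch: "cmod a + cmod h \<le> R0" using h t' R' by simp
      have "(\<Sum>n. h^n *\<^sub>C d n) = (\<Sum>n. (a+h)^n *\<^sub>C c0 n)" using re2[OF ch] by (simp add: sums_iff)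
      also have "a + h = complex_of_real (t' - t0)" unfolding a_def h by (simp add: of_real_diff)
      also have "(\<Sum>n. (complex_of_real (t' - t0))^n *\<^sub>C c0 n) = A t'"
        by (rule rep0[OF t'(1)]) (use t' R' ca in linarith)
      also have "A t' = (\<Sum>n. h^n *\<^sub>C c1 n)" unfolding h
        by (rule rep1[OF t'(1), symmetric]) (use t' R' in linarith)
      finally show ?thesis .
    qed
  qed
  show "summable (\<lambda>n. (R0 - \<bar>t1 - t0\<bar>)^n * norm (c1 n))"
  proof -
    have "summable (\<lambda>m. cmod (complex_of_real (R0 - cmod a))^m * norm (d m))"
      by (rule re1) (use a in simp)
    then show ?thesis using a ca dc by simp
  qed
  show "(\<Sum>n. (z - complex_of_real t1)^n *\<^sub>C c1 n) = (\<Sum>n. (z - complex_of_real t0)^n *\<^sub>C c0 n)"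
    if z: "cmod (z - complex_of_real t1) + \<bar>t1 - t0\<bar> \<le> R0" for z
  proof -
    have ch: "cmod a + cmod (z - complex_of_real t1) \<le> R0" using z ca by simp
    have "(\<Sum>n. (z - complex_of_real t1)^n *\<^sub>C c1 n) = (\<Sum>n. (a + (z - complex_of_real t1))^n *\<^sub>C c0 n)"
      using re2[OF ch] dc by (simp add: sums_iff)
    also have "a + (z - complex_of_real t1) = z - complex_of_real t0" unfolding a_def by (simp add: of_real_diff)
    finally show ?thesis .
  qed
qed

lemma cmod_of_real_diff: "cmod (complex_of_real a - complex_of_real b) = \<bar>a - b\<bar>"
  by (metis norm_of_real of_real_diff)

lemma uniform_expansion:
  fixes A :: "real \<Rightarrow> ('d::complex_banach \<Rightarrow>\<^sub>L 'x::complex_banach)"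
  assumes A_analytic: "real_analytic_into clin {0..1} A"
  obtains \<epsilon> c where "\<epsilon> > 0" "\<And>t n. t \<in> {0..1} \<Longrightarrow> clin (c t n)"
    "\<And>t. t \<in> {0..1} \<Longrightarrow> summable (\<lambda>n. \<epsilon>^n * norm (c t n))"
    "\<And>t t'. t \<in> {0..1} \<Longrightarrow> t' \<in> {0..1} \<Longrightarrow> \<bar>t' - t\<bar> < \<epsilon> \<Longrightarrow>
        (\<Sum>n. (complex_of_real (t' - t))^n *\<^sub>C c t n) = A t'"
proof -
  have "\<forall>t0\<in>{0..1}. \<exists>e>0. \<exists>c. (\<forall>n. clin (c n)) \<and>
     (\<forall>t\<in>{0..1}. \<bar>t - t0\<bar> < e \<longrightarrow>
        summable (\<lambda>n. \<bar>t - t0\<bar> ^ n * norm (c n)) \<and> (\<lambda>n. (t - t0) ^ n *\<^sub>R c n) sums A t)"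
    using A_analytic unfolding real_analytic_into_def .
  from bchoice[OF this] obtain e where e: "\<forall>t0\<in>{0..1}. e t0 > 0 \<and> (\<exists>c. (\<forall>n. clin (c n)) \<and>
     (\<forall>t\<in>{0..1}. \<bar>t - t0\<bar> < e t0 \<longrightarrow>
        summable (\<lambda>n. \<bar>t - t0\<bar> ^ n * norm (c n)) \<and> (\<lambda>n. (t - t0) ^ n *\<^sub>R c n) sums A t))"
    by blast
  then have "\<forall>t0\<in>{0..1}. \<exists>c. (\<forall>n. clin (c n)) \<and>
     (\<forall>t\<in>{0..1}. \<bar>t - t0\<bar> < e t0 \<longrightarrow>
        summable (\<lambda>n. \<bar>t - t0\<bar> ^ n * norm (c n)) \<and> (\<lambda>n. (t - t0) ^ n *\<^sub>R c n) sums A t)"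
    by blast
  from bchoice[OF this] obtain c where c: "\<forall>t0\<in>{0..1}. (\<forall>n. clin (c t0 n)) \<and>
     (\<forall>t\<in>{0..1}. \<bar>t - t0\<bar> < e t0 \<longrightarrow>
        summable (\<lambda>n. \<bar>t - t0\<bar> ^ n * norm (c t0 n)) \<and> (\<lambda>n. (t - t0) ^ n *\<^sub>R c t0 n) sums A t)"
    by blast
  define s where "s t0 = min (e t0) 1 / 2" for t0
  have s: "0 < s t0" "s t0 < e t0" "s t0 \<le> 1/2" if "t0 \<in> {0..1}" for t0
  proof -
    have "e t0 > 0" using e that by blast
    then show "0 < s t0" "s t0 < e t0" "s t0 \<le> 1/2" unfolding s_def by (auto simp: min_def)
  qed
  have Ss: "summable (\<lambda>n. s t0^n * norm (c t0 n))" if t0: "t0 \<in> {0..1}" for t0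
  proof -
    define t where "t = (if t0 \<le> 1/2 then t0 + s t0 else t0 - s t0)"
    have t: "t \<in> {0..1}" "\<bar>t - t0\<bar> = s t0" using t0 s[OF t0] unfolding t_def by auto
    have ct: "\<forall>t\<in>{0..1}. \<bar>t - t0\<bar> < e t0 \<longrightarrow> summable (\<lambda>n. \<bar>t - t0\<bar> ^ n * norm (c t0 n))"
      using c t0 by blast
    have "summable (\<lambda>n. \<bar>t - t0\<bar> ^ n * norm (c t0 n))" using bspec[OF ct t(1)] t(2) s(2)[OF t0] by simp
    then show ?thesis using t by simp
  qed
  have rep: "(\<Sum>n. (complex_of_real (t' - t0))^n *\<^sub>C c t0 n) = A t'"
    if t0: "t0 \<in> {0..1}" and t': "t' \<in> {0..1}" and d: "\<bar>t' - t0\<bar> < s t0" for t0 t'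
  proof -
    have ct: "\<forall>t\<in>{0..1}. \<bar>t - t0\<bar> < e t0 \<longrightarrow> (\<lambda>n. (t - t0) ^ n *\<^sub>R c t0 n) sums A t"
      using c t0 by blast
    have "(\<lambda>n. (t' - t0) ^ n *\<^sub>R c t0 n) sums A t'" using bspec[OF ct t'] d s(2)[OF t0] by simp
    then show ?thesis unfolding real_scaleC[symmetric] by (simp add: sums_iff)
  qed
  define K where "K = complex_of_real ` {0..1}"
  have cK: "compact K" unfolding K_def
    by (rule compact_continuous_image) (auto intro!: continuous_intros)
  define \<G> where "\<G> = (\<lambda>t0. ball (complex_of_real t0) (s t0 / 2)) ` {0..1}"
  have KG: "K \<subseteq> \<Union>\<G>"
  proof
    fix x assume "x \<in> K"
    then obtain t where t: "t \<in> {0..1}" "x = complex_of_real t" unfolding K_def by auto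
    then have "x \<in> ball (complex_of_real t) (s t / 2)" using s[OF t(1)] by simp
    then show "x \<in> \<Union>\<G>" using t unfolding \<G>_def by blast
  qed
  obtain \<epsilon> where \<epsilon>: "0 < \<epsilon>" and leb: "\<And>x. x \<in> K \<Longrightarrow> \<exists>G\<in>\<G>. ball x \<epsilon> \<subseteq> G"
    using Heine_Borel_lemma[OF cK KG] unfolding \<G>_def by blast
  have cover: "\<exists>t0\<in>{0..1}. \<bar>t - t0\<bar> + \<epsilon> \<le> s t0 / 2" if t: "t \<in> {0..1}" for t
  proof -
    obtain G where G: "G \<in> \<G>" "ball (complex_of_real t) \<epsilon> \<subseteq> G"
      using leb[of "complex_of_real t"] t unfolding K_def by auto
    then obtain t0 where t0: "t0 \<in> {0..1}" "ball (complex_of_real t) \<epsilon> \<subseteq> ball (complex_of_real t0) (s t0 / 2)"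
      unfolding \<G>_def by auto
    then have "dist (complex_of_real t) (complex_of_real t0) + \<epsilon> \<le> s t0 / 2"
      using \<epsilon> by (simp add: ball_subset_ball_iff)
    moreover have "dist (complex_of_real t) (complex_of_real t0) = \<bar>t - t0\<bar>"
      by (simp add: dist_norm of_real_diff[symmetric])
    ultimately show ?thesis using t0 by auto
  qed
  have main: "summable (\<lambda>n. \<epsilon>^n * norm (c t n)) \<and>
      (\<forall>t'\<in>{0..1}. \<bar>t' - t\<bar> < \<epsilon> \<longrightarrow> (\<Sum>n. (complex_of_real (t' - t))^n *\<^sub>C c t n) = A t')"
    if t: "t \<in> {0..1}" for t
  proof -
    obtain t0 where t0: "t0 \<in> {0..1}" "\<bar>t - t0\<bar> + \<epsilon> \<le> s t0 / 2" using cover[OF t] by blast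
    have tt0: "\<bar>t - t0\<bar> < s t0" using t0 \<epsilon> s[OF t0(1)] by linarith
    have rep0: "\<forall>t'\<in>{0..1}. \<bar>t' - t0\<bar> < s t0 \<longrightarrow> (\<Sum>n. (complex_of_real (t' - t0))^n *\<^sub>C c t0 n) = A t'"
      using rep[OF t0(1)] by blast
    have rep1: "\<forall>t'\<in>{0..1}. \<bar>t' - t\<bar> < s t \<longrightarrow> (\<Sum>n. (complex_of_real (t' - t))^n *\<^sub>C c t n) = A t'"
      using rep[OF t] by blast
    note tr = transfer[OF s(1)[OF t0(1)] Ss[OF t0(1)] rep0 s(1)[OF t] Ss[OF t] rep1 t tt0]
    have "summable (\<lambda>n. \<epsilon>^n * norm (c t n))"
      by (rule ps_summable_le[OF tr(1)]) (use \<epsilon> t0 abs_ge_zero[of "t - t0"] in linarith)+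
    moreover have "(\<Sum>n. (complex_of_real (t' - t))^n *\<^sub>C c t n) = A t'"
      if t': "t' \<in> {0..1}" "\<bar>t' - t\<bar> < \<epsilon>" for t'
    proof -
      have d1: "\<bar>t' - t\<bar> < \<epsilon>" by (rule t'(2))
      have d2: "\<bar>t - t0\<bar> + \<epsilon> \<le> s t0 / 2" by (rule t0(2))
      have d3: "0 < s t0" by (rule s(1)[OF t0(1)])
      have d4: "cmod (complex_of_real t' - complex_of_real t) = \<bar>t' - t\<bar>" by (rule cmod_of_real_diff)
      have d5: "cmod (complex_of_real t' - complex_of_real t) + \<bar>t - t0\<bar> \<le> s t0"
        using d1 d2 d3 d4 by linarith
      have "(\<Sum>n. (complex_of_real t' - complex_of_real t)^n *\<^sub>C c t n)
          = (\<Sum>n. (complex_of_real t' - complex_of_real t0)^n *\<^sub>C c t0 n)"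
        by (rule tr(2)[OF d5])
      also have "\<dots> = A t'" unfolding of_real_diff[symmetric]
        by (rule rep[OF t0(1) t'(1)]) (use t' t0 in linarith)
      finally show ?thesis by (simp add: of_real_diff)
    qed
    ultimately show ?thesis by blast
  qed
  show ?thesis
  proof (rule that[OF \<epsilon>])
    show "clin (c t n)" if "t \<in> {0..1}" for t n using c that by blast
    show "summable (\<lambda>n. \<epsilon>^n * norm (c t n))" if "t \<in> {0..1}" for t using main[OF that] by blast
    show "(\<Sum>n. (complex_of_real (t' - t))^n *\<^sub>C c t n) = A t'"
      if "t \<in> {0..1}" "t' \<in> {0..1}" "\<bar>t' - t\<bar> < \<epsilon>" for t t' using main[OF that(1)] that by blast
  qed
qed

definition clamp :: "complex \<Rightarrow> real" where
  "clamp z = max 0 (min 1 (Re z))"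

lemma clamp_in: "clamp z \<in> {0..1}"
  unfolding clamp_def by auto

lemma clamp_real: "t \<in> {0..1} \<Longrightarrow> clamp (complex_of_real t) = t"
  unfolding clamp_def by auto

lemma clamp_lip: "\<bar>clamp z - clamp w\<bar> \<le> cmod (z - w)"
proof -
  have "\<bar>clamp z - clamp w\<bar> \<le> \<bar>Re z - Re w\<bar>"
    unfolding clamp_def by (auto simp: max_def min_def abs_if)
  also have "\<dots> = \<bar>Re (z - w)\<bar>" by simp
  also have "\<dots> \<le> cmod (z - w)" by (rule abs_Re_le_cmod)
  finally show ?thesis .
qed

lemma cmod_sq_real_diff: "(cmod (z - complex_of_real s))^2 = (Re z - s)^2 + (Im z)^2"
  by (simp add: cmod_power2)

lemma clamp_near:
  assumes t: "t \<in> {0..1}"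
  shows "cmod (z - complex_of_real (clamp z)) \<le> cmod (z - complex_of_real t)"
proof -
  have "\<bar>Re z - clamp z\<bar> \<le> \<bar>Re z - t\<bar>"
    using t unfolding clamp_def by (auto simp: max_def min_def abs_if)
  then have "(Re z - clamp z)^2 \<le> (Re z - t)^2"
    by (simp add: abs_le_square_iff)
  then have "(cmod (z - complex_of_real (clamp z)))^2 \<le> (cmod (z - complex_of_real t))^2"
    unfolding cmod_sq_real_diff by simp
  then show ?thesis by (rule power2_le_imp_le) simp
qed

definition Ur :: "real \<Rightarrow> complex set" where
  "Ur r = (\<Union>x\<in>complex_of_real ` {0..1}. \<Union>y\<in>ball 0 r. {x + y})"

lemma Ur_convex: "convex (Ur r)"
  unfolding Ur_def
proof (rule convex_sums)
  show "convex (complex_of_real ` {0..1})"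
    by (rule convex_linear_image[OF bounded_linear.linear[OF bounded_linear_of_real]]) (rule convex_real_interval)
qed (rule convex_ball)

lemma Ur_open: "open (Ur r)"
  unfolding Ur_def by (rule open_sums) simp

lemma Ur_sub: "r > 0 \<Longrightarrow> complex_of_real ` {0..1} \<subseteq> Ur r"
  unfolding Ur_def by force

lemma Ur_mono: "r \<le> r' \<Longrightarrow> Ur r \<subseteq> Ur r'"
  unfolding Ur_def by force

lemma Ur_memE:
  assumes "z \<in> Ur r"
  obtains t where "t \<in> {0..1}" "cmod (z - complex_of_real t) < r"
  using assms unfolding Ur_def by (auto simp: dist_norm)

lemma Ur_mem:
  assumes "z \<in> Ur r"
  shows "cmod (z - complex_of_real (clamp z)) < r"
proof -
  obtain t where t: "t \<in> {0..1}" "cmod (z - complex_of_real t) < r" using Ur_memE[OF assms] by blast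
  have "cmod (z - complex_of_real (clamp z)) \<le> cmod (z - complex_of_real t)" by (rule clamp_near[OF t(1)])
  with t(2) show ?thesis by linarith
qed

lemma complex_analytic_op_mono:
  assumes UV: "U \<subseteq> V" and an: "complex_analytic_op V f"
  shows "complex_analytic_op U f"
  unfolding complex_analytic_op_def
proof
  fix z0 assume "z0 \<in> U"
  then have z0: "z0 \<in> V" using UV by blast
  from bspec[OF an[unfolded complex_analytic_op_def] z0]
  obtain e c where e: "e > 0" and cl: "\<forall>n. clin (c n)"
    and P: "\<forall>z\<in>V. cmod (z - z0) < e \<longrightarrow>
        summable (\<lambda>n. cmod (z - z0) ^ n * norm (c n)) \<and> (\<lambda>n. cscale ((z - z0) ^ n) (c n)) sums f z"
    by (elim exE conjE)
  show "\<exists>e>0. \<exists>c. (\<forall>n. clin (c n)) \<and> (\<forall>z\<in>U. cmod (z - z0) < e \<longrightarrow>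
        summable (\<lambda>n. cmod (z - z0) ^ n * norm (c n)) \<and> (\<lambda>n. cscale ((z - z0) ^ n) (c n)) sums f z)"
  proof (intro exI conjI ballI impI)
    show "e > 0" by (rule e)
    show "\<forall>n. clin (c n)" by (rule cl)
    fix z assume "z \<in> U" "cmod (z - z0) < e"
    then have "z \<in> V" "cmod (z - z0) < e" using UV by auto
    then show "summable (\<lambda>n. cmod (z - z0) ^ n * norm (c n))" "(\<lambda>n. cscale ((z - z0) ^ n) (c n)) sums f z"
      using P by auto
  qed
qed

lemma ps_at0: "(\<Sum>n. (0::complex)^n *\<^sub>C (c n::'a::complex_banach)) = c 0"
proof -
  have eq: "(\<lambda>n. (0::complex)^n *\<^sub>C c n) = (\<lambda>n. if n = 0 then c n else 0)"
    by (auto simp: fun_eq_iff power_0_left)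
  show ?thesis using sums_single[of 0 c] by (simp add: eq sums_iff)
qed

lemma in_S_bound:
  fixes j T :: "'d::complex_banach \<Rightarrow>\<^sub>L 'x::complex_banach"
  assumes S: "in_S j M r \<theta> T" and M: "M > 0" and r: "r < 0" and th: "0 < \<theta>" "\<theta> < pi / 2"
  shows "\<exists>K\<ge>0. \<forall>d. norm d \<le> K * norm (T d)"
    and "bij (blinfun_apply T)"
proof -
  have z: "0 \<in> sector r \<theta>" by (rule zero_in_sector[OF r th])
  define f where "f d = - T d" for d
  have feq: "(\<lambda>d. (0::complex) *\<^sub>C j d - T d) = f" unfolding f_def by (simp add: fun_eq_iff)
  have "bij (\<lambda>d. (0::complex) *\<^sub>C j d - T d) \<and>
      (\<forall>x. norm (j (inv (\<lambda>d. (0::complex) *\<^sub>C j d - T d) x)) \<le> M / (1 + cmod (0::complex)) * norm x)"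
    using S z unfolding in_S_def by blast
  then have "bij f \<and> (\<forall>x. norm (j (inv f x)) \<le> M * norm x)" unfolding feq by simp
  then have bf: "bij f" and bnd: "\<And>x. norm (j (inv f x)) \<le> M * norm x" by auto
  obtain C where C: "\<And>d. norm d \<le> C * (norm (T d) + norm (j d))"
    using S unfolding in_S_def closed_op_dom_def by blast
  have "norm d \<le> (\<bar>C\<bar> * (1 + M)) * norm (T d)" for d
  proof -
    have "inv f (f d) = d" by (rule bij_inv_facts(2)[OF bf])
    then have "norm (j d) \<le> M * norm (f d)" using bnd[of "f d"] by simp
    then have jd: "norm (j d) \<le> M * norm (T d)" unfolding f_def by simp
    have "norm d \<le> C * (norm (T d) + norm (j d))" by (rule C)
    also have "\<dots> \<le> \<bar>C\<bar> * (norm (T d) + norm (j d))" by (rule mult_right_mono) auto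
    also have "\<dots> \<le> \<bar>C\<bar> * (norm (T d) + M * norm (T d))" using jd by (intro mult_left_mono) auto
    finally show ?thesis by (simp add: algebra_simps)
  qed
  then show "\<exists>K\<ge>0. \<forall>d. norm d \<le> K * norm (T d)" using M by (intro exI[of _ "\<bar>C\<bar> * (1 + M)"]) auto
  show "bij (blinfun_apply T)"
  proof -
    have "blinfun_apply T = uminus \<circ> f" unfolding f_def by (simp add: fun_eq_iff)
    moreover have "bij (uminus :: 'x \<Rightarrow> 'x)" by (rule bij_uminus)
    ultimately show ?thesis using bf by (simp add: bij_comp)
  qed
qed

lemma part1:
  fixes j :: "'d::complex_banach \<Rightarrow>\<^sub>L 'x::complex_banach"
    and A :: "real \<Rightarrow> ('d \<Rightarrow>\<^sub>L 'x)"
    and M r \<theta> :: real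
  assumes A_analytic: "real_analytic_into clin {0..1} A"
    and M_pos: "M > 0" and r_neg: "r < 0" and theta: "0 < \<theta>" "\<theta> < pi / 2"
    and A_S: "\<forall>t\<in>{0..1}. in_S j M r \<theta> (A t)"
  shows "\<exists>U B. convex U \<and> open U \<and> complex_of_real ` {0..1} \<subseteq> U \<and>
            (\<forall>t\<in>{0..1}. B (complex_of_real t) = A t) \<and>
            complex_analytic_op U B \<and>
            (\<forall>z\<in>U. in_S j (2 * M) r \<theta> (B z))"
proof -
  obtain \<epsilon> c where \<epsilon>: "\<epsilon> > 0" and cl: "\<And>t n. t \<in> {0..1} \<Longrightarrow> clin (c t n)"
    and Sc: "\<And>t. t \<in> {0..1} \<Longrightarrow> summable (\<lambda>n. \<epsilon>^n * norm (c t n))"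
    and rep: "\<And>t t'. t \<in> {0..1} \<Longrightarrow> t' \<in> {0..1} \<Longrightarrow> \<bar>t' - t\<bar> < \<epsilon> \<Longrightarrow>
        (\<Sum>n. (complex_of_real (t' - t))^n *\<^sub>C c t n) = A t'"
    apply (rule uniform_expansion[OF A_analytic]) by blast
  have repA: "\<forall>t'\<in>{0..1}. \<bar>t' - t\<bar> < \<epsilon> \<longrightarrow> (\<Sum>n. (complex_of_real (t' - t))^n *\<^sub>C c t n) = A t'"
    if "t \<in> {0..1}" for t using rep[OF that] by blast
  define F where "F t z = (\<Sum>n. (z - complex_of_real t)^n *\<^sub>C c t n)" for t z
  define B where "B z = F (clamp z) z" for z
  have cons: "F t1 z = F t0 z"
    if t0: "t0 \<in> {0..1}" and t1: "t1 \<in> {0..1}" and d: "\<bar>t1 - t0\<bar> < \<epsilon>"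
      and z: "cmod (z - complex_of_real t1) + \<bar>t1 - t0\<bar> \<le> \<epsilon>" for t0 t1 z
    unfolding F_def
    by (rule transfer(2)[OF \<epsilon> Sc[OF t0] repA[OF t0] \<epsilon> Sc[OF t1] repA[OF t1] t1 d z])
  have FA: "F t (complex_of_real t) = A t" if t: "t \<in> {0..1}" for t
    using rep[OF t t] \<epsilon> unfolding F_def by (simp add: of_real_diff)
  have c0: "c t 0 = A t" if t: "t \<in> {0..1}" for t
    using FA[OF t] unfolding F_def by (simp add: ps_at0)
  have BA: "B (complex_of_real t) = A t" if t: "t \<in> {0..1}" for t
    unfolding B_def clamp_real[OF t] by (rule FA[OF t])
  have clF: "clin (F t z)" if t: "t \<in> {0..1}" and z: "cmod (z - complex_of_real t) \<le> \<epsilon>" for t z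
  proof -
    have "summable (\<lambda>n. cmod (z - complex_of_real t)^n * norm (c t n))"
      by (rule ps_summable_le[OF Sc[OF t]]) (use z in auto)
    then have "summable (\<lambda>n. (z - complex_of_real t)^n *\<^sub>C c t n)" by (rule ps_summable)
    then show ?thesis unfolding F_def by (rule clin_suminf) (intro clin_scaleC cl[OF t])
  qed
  define r0 where "r0 = \<epsilon> / 2"
  have r0: "r0 > 0" "2 * r0 = \<epsilon>" using \<epsilon> unfolding r0_def by auto
  have an: "complex_analytic_op (Ur r0) B"
    unfolding complex_analytic_op_def
  proof
    fix z0 assume z0: "z0 \<in> Ur r0"
    define t0 where "t0 = clamp z0"
    have t0: "t0 \<in> {0..1}" unfolding t0_def by (rule clamp_in)
    have dz0: "cmod (z0 - complex_of_real t0) < r0" unfolding t0_def by (rule Ur_mem[OF z0])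
    define a where "a = z0 - complex_of_real t0"
    have a: "cmod a < \<epsilon>" using dz0 r0 unfolding a_def by linarith
    define d where "d m = (\<Sum>n. (of_nat (n choose m) * a^(n-m)) *\<^sub>C c t0 n)" for m
    show "\<exists>e>0. \<exists>c. (\<forall>n. clin (c n)) \<and> (\<forall>z\<in>Ur r0. cmod (z - z0) < e \<longrightarrow>
        summable (\<lambda>n. cmod (z - z0) ^ n * norm (c n)) \<and> (\<lambda>n. cscale ((z - z0) ^ n) (c n)) sums B z)"
    proof (intro exI conjI allI ballI impI)
      show "r0 > 0" by (rule r0(1))
      show "clin (d m)" for m
      proof -
        have "summable (\<lambda>n. norm ((of_nat (n choose m) * a^(n-m)) *\<^sub>C c t0 n))"
          using coeff_summable[OF Sc[OF t0] a, of m] by (simp add: norm_scaleC norm_mult norm_power)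
        then have "summable (\<lambda>n. (of_nat (n choose m) * a^(n-m)) *\<^sub>C c t0 n)"
          by (rule summable_norm_cancel)
        then show ?thesis unfolding d_def by (rule clin_suminf) (intro clin_scaleC cl[OF t0])
      qed
      fix z assume z: "z \<in> Ur r0" and zz0: "cmod (z - z0) < r0"
      have ah: "cmod a + cmod (z - z0) \<le> \<epsilon>" using dz0 zz0 r0 unfolding a_def by linarith
      show "summable (\<lambda>n. cmod (z - z0)^n * norm (d n))"
        unfolding d_def by (rule reexpand(1)[OF Sc[OF t0] a ah])
      have "(\<lambda>m. (z - z0)^m *\<^sub>C d m) sums (\<Sum>n. (a + (z - z0))^n *\<^sub>C c t0 n)"
        unfolding d_def by (rule reexpand(2)[OF Sc[OF t0] a ah])
      moreover have "a + (z - z0) = z - complex_of_real t0" unfolding a_def by simp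
      moreover have "B z = F t0 z"
      proof -
        define t1 where "t1 = clamp z"
        have t1: "t1 \<in> {0..1}" unfolding t1_def by (rule clamp_in)
        have d1: "\<bar>t1 - t0\<bar> \<le> cmod (z - z0)" unfolding t1_def t0_def by (rule clamp_lip)
        have d2: "cmod (z - complex_of_real t1) < r0" unfolding t1_def by (rule Ur_mem[OF z])
        have "F t1 z = F t0 z" by (rule cons[OF t0 t1]) (use d1 d2 zz0 r0 in linarith)+
        then show ?thesis unfolding B_def t1_def .
      qed
      ultimately show "(\<lambda>n. cscale ((z - z0)^n) (d n)) sums B z"
        unfolding cscale_eq F_def by simp
    qed
  qed
  have Kex: "\<exists>K\<ge>0. \<forall>d. norm d \<le> K * norm (A t d)" if t: "t \<in> {0..1}" for t
    by (rule in_S_bound(1)[OF bspec[OF A_S t] M_pos r_neg theta])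
  then have "\<forall>t\<in>{0..1}. \<exists>K. K \<ge> 0 \<and> (\<forall>d. norm d \<le> K * norm (A t d))" by blast
  from bchoice[OF this] obtain K where K: "\<And>t. t \<in> {0..1} \<Longrightarrow> K t \<ge> 0"
    and Kb: "\<And>t d. t \<in> {0..1} \<Longrightarrow> norm d \<le> K t * norm (A t d)" by blast
  define Sg where "Sg t = (\<Sum>n. \<epsilon>^n * norm (c t n))" for t
  have Sg0: "Sg t \<ge> 0" if t: "t \<in> {0..1}" for t
    unfolding Sg_def by (rule suminf_nonneg[OF Sc[OF t]]) (use \<epsilon> in simp)
  define Q where "Q t = Sg t * (K t * (M + 1))" for t
  have Q0: "Q t \<ge> 0" if t: "t \<in> {0..1}" for t
    unfolding Q_def using Sg0[OF t] K[OF t] M_pos by simp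
  define \<delta> where "\<delta> t = min r0 (\<epsilon> / (2 * (Q t + 1)))" for t
  have \<delta>: "\<delta> t > 0" "\<delta> t \<le> r0" "\<delta> t \<le> \<epsilon> / (2 * (Q t + 1))" if t: "t \<in> {0..1}" for t
    unfolding \<delta>_def using r0 \<epsilon> Q0[OF t] by auto
  have loc: "in_S j (2 * M) r \<theta> (B z)"
    if t: "t \<in> {0..1}" and z: "z \<in> Ur r0" and zt: "cmod (z - complex_of_real t) < \<delta> t" for t z
  proof -
    define t1 where "t1 = clamp z"
    have t1: "t1 \<in> {0..1}" unfolding t1_def by (rule clamp_in)
    have d1: "\<bar>t1 - t\<bar> \<le> cmod (z - complex_of_real t)"
      using clamp_lip[of z "complex_of_real t"] unfolding t1_def clamp_real[OF t] .
    have d2: "cmod (z - complex_of_real t1) \<le> cmod (z - complex_of_real t)"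
      unfolding t1_def by (rule clamp_near[OF t])
    have zt': "cmod (z - complex_of_real t) < r0" using zt \<delta>(2)[OF t] by linarith
    have BF: "B z = F t z"
    proof -
      have "F t1 z = F t z" by (rule cons[OF t t1]) (use d1 d2 zt' r0 in linarith)+
      then show ?thesis unfolding B_def t1_def .
    qed
    have hle: "cmod (z - complex_of_real t) \<le> \<epsilon>" using zt' r0 by linarith
    have E: "norm (B z - A t) \<le> cmod (z - complex_of_real t) / \<epsilon> * Sg t"
      unfolding BF F_def Sg_def c0[OF t, symmetric] by (rule ps_near0[OF \<epsilon> Sc[OF t] hle])
    have small: "norm (B z - A t) * (K t * (M + 1)) \<le> 1/2"
    proof -
      have KM: "K t * (M + 1) \<ge> 0" using K[OF t] M_pos by simp
      have "norm (B z - A t) * (K t * (M + 1)) \<le> cmod (z - complex_of_real t) / \<epsilon> * Sg t * (K t * (M + 1))"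
        by (rule mult_right_mono[OF E KM])
      also have "\<dots> = cmod (z - complex_of_real t) / \<epsilon> * Q t" unfolding Q_def by simp
      also have "\<dots> \<le> (1 / (2 * (Q t + 1))) * Q t"
      proof (rule mult_right_mono[OF _ Q0[OF t]])
        have "cmod (z - complex_of_real t) \<le> \<epsilon> / (2 * (Q t + 1))" using zt \<delta>(3)[OF t] by linarith
        then show "cmod (z - complex_of_real t) / \<epsilon> \<le> 1 / (2 * (Q t + 1))"
          using \<epsilon> by (simp add: divide_le_eq field_simps)
      qed
      also have "\<dots> \<le> 1/2" using Q0[OF t] by (simp add: field_simps)
      finally show ?thesis .
    qed
    have clB: "clin (B z)" unfolding BF by (rule clF[OF t hle])
    show ?thesis by (rule perturb[OF bspec[OF A_S t] M_pos K[OF t] Kb[OF t] clB small])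
  qed
  define KK where "KK = complex_of_real ` {0..1::real}"
  have cK: "compact KK" unfolding KK_def
    by (rule compact_continuous_image) (auto intro!: continuous_intros)
  define \<G> where "\<G> = (\<lambda>t. ball (complex_of_real t) (\<delta> t)) ` {0..1}"
  have KG: "KK \<subseteq> \<Union>\<G>"
  proof
    fix x assume "x \<in> KK"
    then obtain t where t: "t \<in> {0..1}" "x = complex_of_real t" unfolding KK_def by auto
    then have "x \<in> ball (complex_of_real t) (\<delta> t)" using \<delta>(1)[OF t(1)] by simp
    then show "x \<in> \<Union>\<G>" using t unfolding \<G>_def by blast
  qed
  obtain \<eta> where \<eta>: "0 < \<eta>" and leb: "\<And>x. x \<in> KK \<Longrightarrow> \<exists>G\<in>\<G>. ball x \<eta> \<subseteq> G"
    using Heine_Borel_lemma[OF cK KG] unfolding \<G>_def by blast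
  define U where "U = Ur (min \<eta> r0)"
  have UU: "U \<subseteq> Ur r0" unfolding U_def by (rule Ur_mono) simp
  show ?thesis
  proof (intro exI conjI)
    show "convex U" unfolding U_def by (rule Ur_convex)
    show "open U" unfolding U_def by (rule Ur_open)
    show "complex_of_real ` {0..1} \<subseteq> U" unfolding U_def by (rule Ur_sub) (use \<eta> r0 in simp)
    show "\<forall>t\<in>{0..1}. B (complex_of_real t) = A t" using BA by blast
    show "complex_analytic_op U B" by (rule complex_analytic_op_mono[OF UU an])
    show "\<forall>z\<in>U. in_S j (2 * M) r \<theta> (B z)"
    proof
      fix z assume zU: "z \<in> U"
      then obtain t' where t': "t' \<in> {0..1}" "cmod (z - complex_of_real t') < min \<eta> r0"
        unfolding U_def by (rule Ur_memE)
      obtain G where G: "G \<in> \<G>" "ball (complex_of_real t') \<eta> \<subseteq> G"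
        using leb[of "complex_of_real t'"] t'(1) unfolding KK_def by auto
      then obtain t where t: "t \<in> {0..1}" "ball (complex_of_real t') \<eta> \<subseteq> ball (complex_of_real t) (\<delta> t)"
        unfolding \<G>_def by auto
      have "z \<in> ball (complex_of_real t') \<eta>" using t'(2) by (simp add: dist_norm norm_minus_commute)
      then have "z \<in> ball (complex_of_real t) (\<delta> t)" using t(2) by blast
      then have zt: "cmod (z - complex_of_real t) < \<delta> t" by (simp add: dist_norm norm_minus_commute)
      show "in_S j (2 * M) r \<theta> (B z)" by (rule loc[OF t(1) _ zt]) (use zU UU in blast)
    qed
  qed
qed

lemma Cauchy_product_sums_bil:
  fixes a :: "nat \<Rightarrow> 'a::banach" and b :: "nat \<Rightarrow> 'b::banach" and prod :: "'a \<Rightarrow> 'b \<Rightarrow> 'c::banach"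
  assumes bb: "bounded_bilinear prod"
    and a: "summable (\<lambda>k. norm (a k))"
    and b: "summable (\<lambda>k. norm (b k))"
  shows "(\<lambda>k. \<Sum>i\<le>k. prod (a i) (b (k - i))) sums (prod (\<Sum>k. a k) (\<Sum>k. b k))"
proof -
  obtain K where K: "K > 0" "\<And>x y. norm (prod x y) \<le> norm x * norm y * K"
    using bounded_bilinear.pos_bounded[OF bb] by blast
  let ?S1 = "\<lambda>n::nat. {..<n} \<times> {..<n}"
  let ?S2 = "\<lambda>n::nat. {(i,j). i + j < n}"
  have S1_mono: "\<And>m n. m \<le> n \<Longrightarrow> ?S1 m \<subseteq> ?S1 n" by auto
  have S2_le_S1: "\<And>n. ?S2 n \<subseteq> ?S1 n" by auto
  have S1_le_S2: "\<And>n. ?S1 (n div 2) \<subseteq> ?S2 n" by auto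
  have finite_S1: "\<And>n. finite (?S1 n)" by simp
  with S2_le_S1 have finite_S2: "\<And>n. finite (?S2 n)" by (rule finite_subset)
  let ?g = "\<lambda>(i,j). prod (a i) (b j)"
  let ?f = "\<lambda>(i,j). norm (a i) * norm (b j)"
  have f_nonneg: "\<And>x. 0 \<le> ?f x" by auto
  then have norm_sum_f: "\<And>A. norm (sum ?f A) = sum ?f A"
    unfolding real_norm_def
    by (simp only: abs_of_nonneg sum_nonneg [rule_format])
  have prod_sum: "prod (sum a {..<n}) (sum b {..<n}) = sum ?g (?S1 n)" for n
  proof -
    have "prod (sum a {..<n}) (sum b {..<n}) = (\<Sum>i<n. prod (a i) (sum b {..<n}))"
      by (rule bounded_bilinear.sum_left[OF bb])
    also have "\<dots> = (\<Sum>i<n. \<Sum>j<n. prod (a i) (b j))"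
      by (simp only: bounded_bilinear.sum_right[OF bb])
    also have "\<dots> = sum ?g (?S1 n)" by (rule sum.cartesian_product)
    finally show ?thesis .
  qed
  have "(\<lambda>n. prod (\<Sum>k<n. a k) (\<Sum>k<n. b k)) \<longlonglongrightarrow> prod (\<Sum>k. a k) (\<Sum>k. b k)"
    by (intro bounded_bilinear.tendsto[OF bb] summable_LIMSEQ summable_norm_cancel [OF a] summable_norm_cancel [OF b])
  then have 1: "(\<lambda>n. sum ?g (?S1 n)) \<longlonglongrightarrow> prod (\<Sum>k. a k) (\<Sum>k. b k)"
    by (simp only: prod_sum)
  have "(\<lambda>n. (\<Sum>k<n. norm (a k)) * (\<Sum>k<n. norm (b k))) \<longlonglongrightarrow> (\<Sum>k. norm (a k)) * (\<Sum>k. norm (b k))"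
    using a b by (intro tendsto_mult summable_LIMSEQ)
  then have "(\<lambda>n. sum ?f (?S1 n)) \<longlonglongrightarrow> (\<Sum>k. norm (a k)) * (\<Sum>k. norm (b k))"
    by (simp only: sum_product sum.Sigma [rule_format] finite_lessThan)
  then have "convergent (\<lambda>n. sum ?f (?S1 n))"
    by (rule convergentI)
  then have Cauchy: "Cauchy (\<lambda>n. sum ?f (?S1 n))"
    by (rule convergent_Cauchy)
  have "Zfun (\<lambda>n. sum ?f (?S1 n - ?S2 n)) sequentially"
  proof (rule ZfunI, simp only: eventually_sequentially norm_sum_f)
    fix r :: real
    assume r: "0 < r"
    from CauchyD [OF Cauchy r] obtain N
      where "\<forall>m\<ge>N. \<forall>n\<ge>N. norm (sum ?f (?S1 m) - sum ?f (?S1 n)) < r" ..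
    then have "\<And>m n. N \<le> n \<Longrightarrow> n \<le> m \<Longrightarrow> norm (sum ?f (?S1 m - ?S1 n)) < r"
      by (simp only: sum_diff finite_S1 S1_mono)
    then have N: "\<And>m n. N \<le> n \<Longrightarrow> n \<le> m \<Longrightarrow> sum ?f (?S1 m - ?S1 n) < r"
      by (simp only: norm_sum_f)
    show "\<exists>N. \<forall>n\<ge>N. sum ?f (?S1 n - ?S2 n) < r"
    proof (intro exI allI impI)
      fix n
      assume "2 * N \<le> n"
      then have n: "N \<le> n div 2" by simp
      have "sum ?f (?S1 n - ?S2 n) \<le> sum ?f (?S1 n - ?S1 (n div 2))"
        by (intro sum_mono2 finite_Diff finite_S1 f_nonneg Diff_mono subset_refl S1_le_S2)
      also have "\<dots> < r"
        using n div_le_dividend by (rule N)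
      finally show "sum ?f (?S1 n - ?S2 n) < r" .
    qed
  qed
  then have "Zfun (\<lambda>n. K * sum ?f (?S1 n - ?S2 n)) sequentially"
    by (rule bounded_linear.Zfun[OF bounded_linear_mult_right])
  then have "Zfun (\<lambda>n. sum ?g (?S1 n - ?S2 n)) sequentially"
  proof (rule Zfun_le, intro allI)
    fix n
    have "norm (sum ?g (?S1 n - ?S2 n)) \<le> (\<Sum>x\<in>?S1 n - ?S2 n. norm (?g x))" by (rule norm_sum)
    also have "\<dots> \<le> (\<Sum>x\<in>?S1 n - ?S2 n. K * ?f x)"
      by (rule sum_mono) (use K(2) in \<open>auto simp: mult.commute\<close>)
    also have "\<dots> = K * sum ?f (?S1 n - ?S2 n)" by (rule sum_distrib_left[symmetric])
    also have "\<dots> = norm (K * sum ?f (?S1 n - ?S2 n))"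
      using K(1) by (simp add: abs_of_nonneg sum_nonneg f_nonneg)
    finally show "norm (sum ?g (?S1 n - ?S2 n)) \<le> norm (K * sum ?f (?S1 n - ?S2 n))" .
  qed
  then have 2: "(\<lambda>n. sum ?g (?S1 n) - sum ?g (?S2 n)) \<longlonglongrightarrow> 0"
    unfolding tendsto_Zfun_iff diff_0_right
    by (simp only: sum_diff finite_S1 S2_le_S1)
  with 1 have "(\<lambda>n. sum ?g (?S2 n)) \<longlonglongrightarrow> prod (\<Sum>k. a k) (\<Sum>k. b k)"
    by (rule Lim_transform2)
  then show ?thesis
    by (simp only: sums_def sum.triangle_reindex)
qed

lemma inv_bl:
  fixes T :: "'d::complex_banach \<Rightarrow>\<^sub>L 'x::complex_banach"
  assumes bij: "bij (blinfun_apply T)" and K: "\<And>d. norm d \<le> K * norm (T d)"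
  shows "bounded_linear (inv (blinfun_apply T))"
    and "clin T \<Longrightarrow> inv (blinfun_apply T) (c *\<^sub>C x) = c *\<^sub>C inv (blinfun_apply T) x"
proof -
  let ?i = "inv (blinfun_apply T)"
  have Ti: "T (?i x) = x" for x by (rule bij_inv_facts(1)[OF bij])
  have inj: "inj (blinfun_apply T)" using bij by (rule bij_is_inj)
  have eq: "a = b" if "T a = T b" for a b using inj that by (simp add: inj_eq)
  show "bounded_linear ?i"
  proof (rule bounded_linear_intro[where K=K])
    show "?i (x + y) = ?i x + ?i y" for x y by (rule eq) (simp add: Ti blinfun.add_right)
    show "?i (r *\<^sub>R x) = r *\<^sub>R ?i x" for r x by (rule eq) (simp add: Ti blinfun.scaleR_right)
    show "norm (?i x) \<le> norm x * K" for x using K[of "?i x"] Ti[of x] by (simp add: mult.commute)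
  qed
  show "?i (c *\<^sub>C x) = c *\<^sub>C ?i x" if cl: "clin T"
    by (rule eq) (simp add: Ti clinD[OF cl])
qed

fun ginv :: "('x::complex_banach \<Rightarrow>\<^sub>L 'd::complex_banach) \<Rightarrow> (nat \<Rightarrow> ('d \<Rightarrow>\<^sub>L 'x)) \<Rightarrow> nat \<Rightarrow> ('x \<Rightarrow>\<^sub>L 'd)" where
  "ginv G c 0 = G"
| "ginv G c (Suc n) = - (G o\<^sub>L (\<Sum>k\<le>n. c (Suc k) o\<^sub>L ginv G c (n - k)))"

lemma ginv_clin:
  assumes "clin G" "\<And>n. clin (c n)"
  shows "clin (ginv G c n)"
proof (induction n rule: less_induct)
  case (less n)
  show ?case
  proof (cases n)
    case 0 then show ?thesis using assms by simp
  next
    case (Suc m)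
    have "clin (\<Sum>k\<le>m. c (Suc k) o\<^sub>L ginv G c (m - k))"
      by (rule clin_sum) (intro clin_compose assms(2) less, use Suc in auto)
    then show ?thesis unfolding Suc by (simp add: clin_minus clin_compose assms(1))
  qed
qed

lemma ginv_coeff:
  fixes c :: "nat \<Rightarrow> ('d::complex_banach \<Rightarrow>\<^sub>L 'x::complex_banach)" and G :: "'x \<Rightarrow>\<^sub>L 'd"
  assumes c0G: "\<And>x. blinfun_apply (c 0) (blinfun_apply G x) = x"
  shows "(\<Sum>i\<le>n. c i o\<^sub>L ginv G c (n - i)) = (if n = 0 then id_blinfun else 0)"
proof (cases n)
  case 0
  then show ?thesis by (auto intro!: blinfun_eqI simp: c0G)
next
  case (Suc m)
  define S where "S = (\<Sum>k\<le>m. c (Suc k) o\<^sub>L ginv G c (m - k))"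
  have "(\<Sum>i\<le>Suc m. c i o\<^sub>L ginv G c (Suc m - i)) = (c 0 o\<^sub>L ginv G c (Suc m)) + (\<Sum>i\<le>m. c (Suc i) o\<^sub>L ginv G c (Suc m - Suc i))"
    by (subst sum.atMost_Suc_shift) simp
  also have "(\<Sum>i\<le>m. c (Suc i) o\<^sub>L ginv G c (Suc m - Suc i)) = S" unfolding S_def by simp
  also have "c 0 o\<^sub>L ginv G c (Suc m) = - S"
    by (rule blinfun_eqI) (simp add: S_def[symmetric] blinfun.minus_left blinfun.minus_right c0G)
  finally show ?thesis using Suc by simp
qed

lemma geom_tele: "((\<gamma>::real) - 1) * (\<Sum>k\<le>m. \<gamma>^k) = \<gamma>^(Suc m) - 1"
  by (induction m) (simp_all add: algebra_simps)

lemma sum_rev_pow: "(\<Sum>k\<le>m. (\<gamma>::real)^(m - k)) = (\<Sum>k\<le>m. \<gamma>^k)"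
  by (rule sum.reindex_bij_witness[of _ "\<lambda>k. m - k" "\<lambda>k. m - k"]) auto

lemma ginv_bound:
  fixes G :: "'x::complex_banach \<Rightarrow>\<^sub>L 'd::complex_banach"
  assumes e: "\<epsilon> > 0" and C: "C \<ge> 0" and cb: "\<And>k. norm (c k) * \<epsilon>^k \<le> C"
  shows "norm (ginv G c n) * \<epsilon>^n \<le> norm G * (1 + norm G * C)^n"
proof (induction n rule: less_induct)
  case (less n)
  define K0 where "K0 = norm G"
  define \<gamma> where "\<gamma> = 1 + K0 * C"
  have K0: "K0 \<ge> 0" unfolding K0_def by simp
  have g1: "\<gamma> \<ge> 1" unfolding \<gamma>_def using K0 C by simp
  show ?case
  proof (cases n)
    case 0 then show ?thesis by simp
  next
    case (Suc m)
    define S where "S = (\<Sum>k\<le>m. c (Suc k) o\<^sub>L ginv G c (m - k))"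
    have IH: "norm (ginv G c (m - k)) * \<epsilon>^(m - k) \<le> K0 * \<gamma>^(m - k)" for k
      using less[of "m - k"] Suc unfolding K0_def \<gamma>_def by simp
    have "norm S * \<epsilon>^(Suc m) \<le> (\<Sum>k\<le>m. norm (c (Suc k)) * norm (ginv G c (m - k))) * \<epsilon>^(Suc m)"
    proof (rule mult_right_mono)
      have "norm S \<le> (\<Sum>k\<le>m. norm (c (Suc k) o\<^sub>L ginv G c (m - k)))" unfolding S_def by (rule norm_sum)
      also have "\<dots> \<le> (\<Sum>k\<le>m. norm (c (Suc k)) * norm (ginv G c (m - k)))"
        by (rule sum_mono) (rule norm_blinfun_compose)
      finally show "norm S \<le> (\<Sum>k\<le>m. norm (c (Suc k)) * norm (ginv G c (m - k)))" .
    qed (use e in simp)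
    also have "\<dots> = (\<Sum>k\<le>m. (norm (c (Suc k)) * \<epsilon>^(Suc k)) * (norm (ginv G c (m - k)) * \<epsilon>^(m - k)))"
      unfolding sum_distrib_right
    proof (rule sum.cong[OF refl])
      fix k assume "k \<in> {..m}"
      then have "Suc k + (m - k) = Suc m" by simp
      then have eq: "\<epsilon>^(Suc m) = \<epsilon>^(Suc k) * \<epsilon>^(m - k)" by (metis power_add)
      show "norm (c (Suc k)) * norm (ginv G c (m - k)) * \<epsilon>^(Suc m) =
          norm (c (Suc k)) * \<epsilon>^(Suc k) * (norm (ginv G c (m - k)) * \<epsilon>^(m - k))"
        unfolding eq by (simp only: mult_ac)
    qed
    also have "\<dots> \<le> (\<Sum>k\<le>m. C * (K0 * \<gamma>^(m - k)))"
      by (rule sum_mono, rule mult_mono[OF cb IH]) (use C e in simp_all)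
    also have "\<dots> = C * K0 * (\<Sum>k\<le>m. \<gamma>^k)"
      by (simp add: sum_distrib_left[symmetric] sum_rev_pow mult.assoc)
    finally have Sb: "norm S * \<epsilon>^(Suc m) \<le> C * K0 * (\<Sum>k\<le>m. \<gamma>^k)" .
    have "norm (ginv G c n) * \<epsilon>^n \<le> K0 * (norm S * \<epsilon>^(Suc m))"
    proof -
      have "norm (ginv G c n) = norm (G o\<^sub>L S)" unfolding Suc S_def by simp
      also have "\<dots> \<le> K0 * norm S" unfolding K0_def by (rule norm_blinfun_compose)
      finally show ?thesis unfolding Suc using e by (simp add: mult_right_mono mult.assoc)
    qed
    also have "\<dots> \<le> K0 * (C * K0 * (\<Sum>k\<le>m. \<gamma>^k))" by (rule mult_left_mono[OF Sb K0])
    also have "\<dots> = K0 * ((\<gamma> - 1) * (\<Sum>k\<le>m. \<gamma>^k))" unfolding \<gamma>_def by (simp add: mult_ac)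
    also have "\<dots> = K0 * (\<gamma>^(Suc m) - 1)" by (simp add: geom_tele)
    also have "\<dots> \<le> K0 * \<gamma>^(Suc m)" using K0 by (simp add: mult_left_mono)
    finally show ?thesis unfolding Suc K0_def \<gamma>_def .
  qed
qed

lemma part2:
  fixes j :: "'d::complex_banach \<Rightarrow>\<^sub>L 'x::complex_banach"
    and A :: "real \<Rightarrow> ('d \<Rightarrow>\<^sub>L 'x)"
    and M r \<theta> :: real
  assumes A_analytic: "real_analytic_into clin {0..1} A"
    and M_pos: "M > 0" and r_neg: "r < 0" and theta: "0 < \<theta>" "\<theta> < pi / 2"
    and A_S: "\<forall>t\<in>{0..1}. in_S j M r \<theta> (A t)"
  shows "\<exists>Ainv :: real \<Rightarrow> ('x \<Rightarrow>\<^sub>L 'd).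
            (\<forall>t\<in>{0..1}. (\<forall>d. blinfun_apply (Ainv t) (blinfun_apply (A t) d) = d) \<and>
                         (\<forall>x. blinfun_apply (A t) (blinfun_apply (Ainv t) x) = x)) \<and>
            real_analytic_into clin {0..1} Ainv"
proof -
  obtain \<epsilon> c where \<epsilon>: "\<epsilon> > 0" and cl: "\<And>t n. t \<in> {0..1} \<Longrightarrow> clin (c t n)"
    and Sc: "\<And>t. t \<in> {0..1} \<Longrightarrow> summable (\<lambda>n. \<epsilon>^n * norm (c t n))"
    and rep: "\<And>t t'. t \<in> {0..1} \<Longrightarrow> t' \<in> {0..1} \<Longrightarrow> \<bar>t' - t\<bar> < \<epsilon> \<Longrightarrow>
        (\<Sum>n. (complex_of_real (t' - t))^n *\<^sub>C c t n) = A t'"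
    apply (rule uniform_expansion[OF A_analytic]) by blast
  have bijA: "bij (blinfun_apply (A t))" if t: "t \<in> {0..1}" for t
    by (rule in_S_bound(2)[OF bspec[OF A_S t] M_pos r_neg theta])
  have Kex: "\<exists>K\<ge>0. \<forall>d. norm d \<le> K * norm (A t d)" if t: "t \<in> {0..1}" for t
    by (rule in_S_bound(1)[OF bspec[OF A_S t] M_pos r_neg theta])
  then have "\<forall>t\<in>{0..1}. \<exists>K. K \<ge> 0 \<and> (\<forall>d. norm d \<le> K * norm (A t d))" by blast
  from bchoice[OF this] obtain K where Kb: "\<And>t d. t \<in> {0..1} \<Longrightarrow> norm d \<le> K t * norm (A t d)" by blast
  have clA: "clin (A t)" if t: "t \<in> {0..1}" for t
    using bspec[OF A_S t] unfolding in_S_def closed_op_dom_def by blast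
  define Ainv where "Ainv t = Blinfun (inv (blinfun_apply (A t)))" for t
  have Aapp: "blinfun_apply (Ainv t) = inv (blinfun_apply (A t))" if t: "t \<in> {0..1}" for t
    unfolding Ainv_def by (rule bounded_linear_Blinfun_apply[OF inv_bl(1)[OF bijA[OF t] Kb[OF t]]])
  have inv1: "Ainv t (A t d) = d" if t: "t \<in> {0..1}" for t d
    unfolding Aapp[OF t] by (rule bij_inv_facts(2)[OF bijA[OF t]])
  have inv2: "A t (Ainv t x) = x" if t: "t \<in> {0..1}" for t x
    unfolding Aapp[OF t] by (rule bij_inv_facts(1)[OF bijA[OF t]])
  have clAinv: "clin (Ainv t)" if t: "t \<in> {0..1}" for t
    unfolding clin_def Aapp[OF t] using inv_bl(2)[OF bijA[OF t] Kb[OF t] clA[OF t]] by blast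
  have c0: "c t 0 = A t" if t: "t \<in> {0..1}" for t
    using rep[OF t t] \<epsilon> by (simp add: ps_at0)
  have an: "real_analytic_into clin {0..1} Ainv"
    unfolding real_analytic_into_def
  proof
    fix t0 :: real assume t0: "t0 \<in> {0..1}"
    define cc where "cc = c t0"
    define G where "G = Ainv t0"
    define K0 where "K0 = norm G"
    define C where "C = (\<Sum>n. \<epsilon>^n * norm (cc n))"
    define \<gamma> where "\<gamma> = 1 + K0 * C"
    define \<rho> where "\<rho> = \<epsilon> / (2 * \<gamma>)"
    define g where "g = ginv G cc"
    have Scc: "summable (\<lambda>n. \<epsilon>^n * norm (cc n))" unfolding cc_def by (rule Sc[OF t0])
    have C0: "C \<ge> 0" unfolding C_def by (rule suminf_nonneg[OF Scc]) (use \<epsilon> in simp)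
    have K00: "K0 \<ge> 0" unfolding K0_def by simp
    have \<gamma>1: "\<gamma> \<ge> 1" unfolding \<gamma>_def using C0 K00 by simp
    have \<rho>: "\<rho> > 0" unfolding \<rho>_def using \<epsilon> \<gamma>1 by simp
    have cb: "norm (cc k) * \<epsilon>^k \<le> C" for k
    proof -
      have "(\<Sum>n\<in>{k}. \<epsilon>^n * norm (cc n)) \<le> C" unfolding C_def
        by (rule sum_le_suminf[OF Scc]) (use \<epsilon> in simp_all)
      then show ?thesis by (simp add: mult.commute)
    qed
    have gb: "norm (g n) * \<epsilon>^n \<le> K0 * \<gamma>^n" for n
      unfolding g_def K0_def \<gamma>_def by (rule ginv_bound[OF \<epsilon> C0 cb])
    have c0G: "blinfun_apply (cc 0) (blinfun_apply G x) = x" for x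
      unfolding cc_def G_def c0[OF t0] by (rule inv2[OF t0])
    show "\<exists>e>0. \<exists>c. (\<forall>n. clin (c n)) \<and> (\<forall>t\<in>{0..1}. \<bar>t - t0\<bar> < e \<longrightarrow>
        summable (\<lambda>n. \<bar>t - t0\<bar> ^ n * norm (c n)) \<and> (\<lambda>n. (t - t0) ^ n *\<^sub>R c n) sums Ainv t)"
    proof (intro exI conjI allI ballI impI)
      show "\<rho> > 0" by (rule \<rho>)
      show "clin (g n)" for n unfolding g_def G_def
        by (rule ginv_clin[OF clAinv[OF t0]]) (unfold cc_def, rule cl[OF t0])
      fix t assume t: "t \<in> {0..1}" and tt0: "\<bar>t - t0\<bar> < \<rho>"
      define h where "h = t - t0"
      have h\<rho>: "\<bar>h\<bar> \<le> \<epsilon> / (2 * \<gamma>)" using tt0 unfolding h_def \<rho>_def by simp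
      have h\<epsilon>: "\<bar>h\<bar> < \<epsilon>"
      proof -
        have "\<epsilon> / (2 * \<gamma>) \<le> \<epsilon> / 2" using \<epsilon> \<gamma>1 by (intro divide_left_mono) auto
        then show ?thesis using h\<rho> \<epsilon> by linarith
      qed
      have sg: "summable (\<lambda>n. \<bar>h\<bar>^n * norm (g n))"
      proof (rule summable_comparison_test'[where g = "\<lambda>n. K0 * (1/2)^n"])
        show "summable (\<lambda>n. K0 * (1/2::real)^n)" by (rule summable_mult) (rule summable_geometric, simp)
      next
        fix n
        have "\<bar>h\<bar>^n * norm (g n) \<le> (\<epsilon> / (2 * \<gamma>))^n * norm (g n)"
          by (intro mult_right_mono power_mono h\<rho>) auto
        also have "\<dots> = (norm (g n) * \<epsilon>^n) / (2 * \<gamma>)^n" by (simp add: power_divide)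
        also have "\<dots> \<le> (K0 * \<gamma>^n) / (2 * \<gamma>)^n"
          by (rule divide_right_mono[OF gb]) (use \<gamma>1 in simp)
        also have "\<dots> = K0 * (1/2)^n" using \<gamma>1 by (simp add: power_mult_distrib power_divide)
        finally show "norm (\<bar>h\<bar>^n * norm (g n)) \<le> K0 * (1/2)^n" by simp
      qed
      then show "summable (\<lambda>n. \<bar>t - t0\<bar>^n * norm (g n))" unfolding h_def .
      define a where "a k = h^k *\<^sub>R cc k" for k
      define b where "b k = h^k *\<^sub>R g k" for k
      have sa: "summable (\<lambda>k. norm (a k))"
      proof -
        have "summable (\<lambda>k. \<bar>h\<bar>^k * norm (cc k))"
          by (rule ps_summable_le[OF Scc]) (use h\<epsilon> in auto)
        then show ?thesis unfolding a_def by (simp add: power_abs)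
      qed
      have sb: "summable (\<lambda>k. norm (b k))" using sg unfolding b_def by (simp add: power_abs)
      have suma: "(\<Sum>k. a k) = A t"
      proof -
        have "(\<Sum>n. (complex_of_real h)^n *\<^sub>C cc n) = A t"
          unfolding h_def cc_def by (rule rep[OF t0 t]) (use tt0 h\<epsilon> in \<open>simp add: h_def\<close>)
        then show ?thesis unfolding a_def real_scaleC .
      qed
      have cp: "(\<lambda>k. \<Sum>i\<le>k. a i o\<^sub>L b (k - i)) sums ((\<Sum>k. a k) o\<^sub>L (\<Sum>k. b k))"
        by (rule Cauchy_product_sums_bil[OF bounded_bilinear_blinfun_compose sa sb])
      have trm: "(\<Sum>i\<le>k. a i o\<^sub>L b (k - i)) = (if k = 0 then id_blinfun else 0)" for k
      proof -
        have "(\<Sum>i\<le>k. a i o\<^sub>L b (k - i)) = (\<Sum>i\<le>k. h^k *\<^sub>R (cc i o\<^sub>L g (k - i)))"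
        proof (rule sum.cong[OF refl])
          fix i assume "i \<in> {..k}"
          then have "i + (k - i) = k" by simp
          then have hp0: "h^i * h^(k - i) = h^k" by (metis power_add)
          then have hp: "h^(k - i) * h^i = h^k" by (simp only: mult.commute)
          show "a i o\<^sub>L b (k - i) = h^k *\<^sub>R (cc i o\<^sub>L g (k - i))"
            unfolding a_def b_def
            by (simp add: bounded_bilinear.scaleR_left[OF bounded_bilinear_blinfun_compose]
                bounded_bilinear.scaleR_right[OF bounded_bilinear_blinfun_compose] hp)
        qed
        also have "\<dots> = h^k *\<^sub>R (\<Sum>i\<le>k. cc i o\<^sub>L g (k - i))" by (simp add: scaleR_sum_right)
        also have "\<dots> = (if k = 0 then id_blinfun else 0)"
          unfolding g_def ginv_coeff[of cc G, OF c0G] by simp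
        finally show ?thesis .
      qed
      have "(\<lambda>k. if k = 0 then id_blinfun else 0) sums (A t o\<^sub>L (\<Sum>k. b k))"
        using cp unfolding trm suma .
      moreover have "(\<lambda>k. if k = 0 then (id_blinfun :: 'x \<Rightarrow>\<^sub>L 'x) else 0) sums id_blinfun"
        using sums_single[of 0 "\<lambda>_. id_blinfun :: 'x \<Rightarrow>\<^sub>L 'x"] by simp
      ultimately have AB: "A t o\<^sub>L (\<Sum>k. b k) = id_blinfun" by (simp add: sums_iff)
      have Bsum: "(\<Sum>k. b k) = Ainv t"
      proof (rule blinfun_eqI)
        fix x
        have "A t ((\<Sum>k. b k) x) = x" using AB by (metis blinfun_apply_blinfun_compose blinfun_apply_id_blinfun)
        then have "Ainv t (A t ((\<Sum>k. b k) x)) = Ainv t x" by simp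
        then show "(\<Sum>k. b k) x = Ainv t x" using inv1[OF t] by simp
      qed
      have "b sums (\<Sum>k. b k)" by (rule summable_sums[OF summable_norm_cancel[OF sb]])
      then have "b sums Ainv t" by (simp only: Bsum)
      then show "(\<lambda>n. (t - t0)^n *\<^sub>R g n) sums Ainv t" unfolding Bsum b_def h_def .
    qed
  qed
  show ?thesis
    by (rule exI[of _ Ainv]) (use inv1 inv2 an in blast)
qed

theorem lemma2:
  fixes j :: "'d::complex_banach \<Rightarrow>\<^sub>L 'x::complex_banach"
    and A :: "real \<Rightarrow> ('d \<Rightarrow>\<^sub>L 'x)"
    and M r \<theta> :: real
  assumes j_inj: "inj (blinfun_apply j)" and j_clin: "clin j"
    and A_closed: "\<forall>t\<in>{0..1}. closed_op_dom j (A t)"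
    and A_analytic: "real_analytic_into clin {0..1} A"
    and M_pos: "M > 0" and r_neg: "r < 0" and theta: "0 < \<theta>" "\<theta> < pi / 2"
    and A_S: "\<forall>t\<in>{0..1}. in_S j M r \<theta> (A t)"
  shows "(\<exists>U B. convex U \<and> open U \<and> complex_of_real ` {0..1} \<subseteq> U \<and>
            (\<forall>t\<in>{0..1}. B (complex_of_real t) = A t) \<and>
            complex_analytic_op U B \<and>
            (\<forall>z\<in>U. in_S j (2 * M) r \<theta> (B z)))
       \<and> (\<exists>Ainv :: real \<Rightarrow> ('x \<Rightarrow>\<^sub>L 'd).
            (\<forall>t\<in>{0..1}. (\<forall>d. blinfun_apply (Ainv t) (blinfun_apply (A t) d) = d) \<and>
                         (\<forall>x. blinfun_apply (A t) (blinfun_apply (Ainv t) x) = x)) \<and>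
            real_analytic_into clin {0..1} Ainv)"
    by (rule conjI[OF part1[OF A_analytic M_pos r_neg theta A_S] part2[OF A_analytic M_pos r_neg theta A_S]])

end
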